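(* For each $F\in L^2(\Omega)$ there exists a unique $w$ with $\rho^{m-1}w\in H^1_0(\Omega)$ such that ${\mathcal T}_a w=F$, i.e. $W:=\rho^{m-1}w$ is a weak solution of $$L_a^{0,0}W-\frac{(m-1)(m-2)}{\rho^2}W=\rho^{m-2}F\quad\text{in }\Omega .$$ Furthermore, $\|\rho^{m-1}w\|_{H^1(\Omega)}\le C\|F\|_{L^2(\Omega)}$ with $C$ independent of $F$.
   Context: $\mathbb{T}:=\mathbb{R}/2\pi\mathbb{Z}$, $\Omega:=\{(R,\theta)\in(1,7)\times\mathbb{T}\}$ (polar coordinates on an annulus); $L^2(\Omega)$, $H^1(\Omega)$, $H^1_0(\Omega)$ are taken in coordinates $(R,\theta)$ with measure $dR\,d\theta$. $\rho(R):=\frac16(R-1)(7-R)$. Standing assumptions: $a\ge4$ is a real parameter, $j\ge4$ is an integer and $m\in\mathbb{R}\setminus\frac12\mathbb{Z}$ with $m\ge j+2$. The operator $L_a^{0,0}u:=\partial_R^2u+\frac{1}{R+a-4}\partial_Ru+\frac{1}{(R+a-4)^2}\partial_\theta^2u$ (the Laplacian in these coordinates), and ${\mathcal T}_aw:=\rho\Big[\rho^{1-m}L_a^{0,0}(\rho^{m-1}w)-\frac{(m-1)(m-2)}{\rho^2}w\Big]$. Weak solution means: for all $V\in H^1_0(\Omega)$, $\int_\Omega[\partial_RW\partial_RV+\frac{\partial_\theta W\partial_\theta V}{(R+a-4)^2}+\frac{(m-1)(m-2)}{\rho^2}WV](R+a-4)\,dR\,d\theta=-\int_\Omega\rho^{m-2}FV(R+a-4)\,dR\,d\theta$.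 *)

theory Defs
  imports "HOL-Analysis.Analysis"
begin

text \<open>Polar coordinates (R,theta) on the annulus Omega = (1,7) x T, T = R/2piZ.
  Functions on Omega are represented as functions on real x real; only their values on
  the fundamental strip Om = (1,7) x (0,2pi) matter (integration is over Om with
  Lebesgue measure dR dtheta). Periodicity in theta enters through the test functions,
  which are 2pi-periodic in theta.\<close>

definition Om :: "(real \<times> real) set" where
  "Om = {1<..<7} \<times> {0<..<2*pi}"

definition rho :: "real \<Rightarrow> real" where
  "rho R = (R - 1) * (7 - R) / 6"

definition dR :: "(real \<times> real \<Rightarrow> real) \<Rightarrow> real \<times> real \<Rightarrow> real" where
  "dR f = (\<lambda>(R, t). deriv (\<lambda>r. f (r, t)) R)"

definition dT :: "(real \<times> real \<Rightarrow> real) \<Rightarrow> real \<times> real \<Rightarrow> real" where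
  "dT f = (\<lambda>(R, t). deriv (\<lambda>s. f (R, s)) t)"

fun pd :: "bool list \<Rightarrow> (real \<times> real \<Rightarrow> real) \<Rightarrow> real \<times> real \<Rightarrow> real" where
  "pd [] f = f"
| "pd (b # bs) f = (if b then dR (pd bs f) else dT (pd bs f))"

definition smooth :: "(real \<times> real \<Rightarrow> real) \<Rightarrow> bool" where
  "smooth f \<longleftrightarrow> (\<forall>bs. continuous_on UNIV (pd bs f) \<and>
      (\<forall>R t. (\<lambda>r. pd bs f (r, t)) differentiable (at R) \<and>
             (\<lambda>s. pd bs f (R, s)) differentiable (at t)))"

definition test :: "(real \<times> real \<Rightarrow> real) \<Rightarrow> bool" where
  "test \<phi> \<longleftrightarrow> smooth \<phi> \<and> (\<forall>R t. \<phi> (R, t + 2*pi) = \<phi> (R, t)) \<and>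
     (\<exists>\<delta>>0. \<forall>R t. (R \<le> 1 + \<delta> \<or> 7 - \<delta> \<le> R) \<longrightarrow> \<phi> (R, t) = 0)"

definition L2 :: "(real \<times> real \<Rightarrow> real) \<Rightarrow> bool" where
  "L2 f \<longleftrightarrow> set_borel_measurable lborel Om f \<and> set_integrable lborel Om (\<lambda>x. (f x)^2)"

definition L2norm :: "(real \<times> real \<Rightarrow> real) \<Rightarrow> real" where
  "L2norm f = sqrt (LINT x:Om|lborel. (f x)^2)"

definition weak_derivs ::
  "(real \<times> real \<Rightarrow> real) \<Rightarrow> (real \<times> real \<Rightarrow> real) \<Rightarrow> (real \<times> real \<Rightarrow> real) \<Rightarrow> bool" where
  "weak_derivs u gR gT \<longleftrightarrow> (\<forall>\<phi>. test \<phi> \<longrightarrow>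
     (LINT x:Om|lborel. u x * dR \<phi> x) = - (LINT x:Om|lborel. gR x * \<phi> x) \<and>
     (LINT x:Om|lborel. u x * dT \<phi> x) = - (LINT x:Om|lborel. gT x * \<phi> x))"

definition H1 ::
  "(real \<times> real \<Rightarrow> real) \<Rightarrow> (real \<times> real \<Rightarrow> real) \<Rightarrow> (real \<times> real \<Rightarrow> real) \<Rightarrow> bool" where
  "H1 u gR gT \<longleftrightarrow> L2 u \<and> L2 gR \<and> L2 gT \<and> weak_derivs u gR gT"

definition H1norm ::
  "(real \<times> real \<Rightarrow> real) \<Rightarrow> (real \<times> real \<Rightarrow> real) \<Rightarrow> (real \<times> real \<Rightarrow> real) \<Rightarrow> real" where
  "H1norm u gR gT = sqrt (LINT x:Om|lborel. (u x)^2 + (gR x)^2 + (gT x)^2)"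

definition H10 ::
  "(real \<times> real \<Rightarrow> real) \<Rightarrow> (real \<times> real \<Rightarrow> real) \<Rightarrow> (real \<times> real \<Rightarrow> real) \<Rightarrow> bool" where
  "H10 u gR gT \<longleftrightarrow> H1 u gR gT \<and>
     (\<exists>\<phi>::nat \<Rightarrow> real \<times> real \<Rightarrow> real. (\<forall>n. test (\<phi> n)) \<and>
        (\<lambda>n. LINT x:Om|lborel. (\<phi> n x - u x)^2 + (dR (\<phi> n) x - gR x)^2
                                + (dT (\<phi> n) x - gT x)^2) \<longlonglongrightarrow> 0)"

text \<open>W (with weak gradient (WR, WT)) is a weak solution of
  L_a^{0,0} W - (m-1)(m-2)/rho^2 W = rho^(m-2) F in Omega.\<close>
definition weak_sol :: "real \<Rightarrow> real \<Rightarrow> (real \<times> real \<Rightarrow> real) \<Rightarrow>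
    (real \<times> real \<Rightarrow> real) \<Rightarrow> (real \<times> real \<Rightarrow> real) \<Rightarrow> (real \<times> real \<Rightarrow> real) \<Rightarrow> bool" where
  "weak_sol a m F W WR WT \<longleftrightarrow> (\<forall>V VR VT. H10 V VR VT \<longrightarrow>
     (let I = (\<lambda>x. (WR x * VR x + WT x * VT x / (fst x + a - 4)^2
                    + (m - 1) * (m - 2) / (rho (fst x))^2 * W x * V x) * (fst x + a - 4))
      in set_integrable lborel Om I \<and>
         (LINT x:Om|lborel. I x) =
           - (LINT x:Om|lborel. rho (fst x) powr (m - 2) * F x * V x * (fst x + a - 4))))"

end

theory Submission
  imports Defs "HOL-Analysis.Analysis"
begin

abbreviation MM :: "(real \<times> real) measure" where "MM \<equiv> restrict_space lborel Om"

lemma Om_box: "Om = box (1,0) (7,2*pi)" unfolding Om_def by (auto simp: box_prod)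

lemma Om_open: "open Om" unfolding Om_box by (rule open_box)

lemma Om_sets[measurable, simp]: "Om \<in> sets lborel" "Om \<in> sets borel"
  using Om_open by (auto intro: borel_open)

lemma space_MM[simp]: "space MM = Om"
  by (simp add: space_restrict_space)

lemma Om_cbox: "Om \<subseteq> cbox (1,0) (7,2*pi)"
  unfolding Om_box using box_subset_cbox by blast

lemma Om_fst: "x \<in> Om \<Longrightarrow> 1 < fst x \<and> fst x < 7"
  unfolding Om_def by auto

lemma rho_pos: "1 < R \<Longrightarrow> R < 7 \<Longrightarrow> 0 < rho R"
  unfolding rho_def by simp

lemma rho_le: "rho R \<le> 3/2"
proof -
  have "(R - 1) * (7 - R) = 9 - (R-4)^2" by (simp add: power2_eq_square algebra_simps)
  then have "(R - 1) * (7 - R) \<le> 9" using zero_le_power2[of "R-4"] by linarith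
  then show ?thesis unfolding rho_def by simp
qed

lemma finite_MM: "finite_measure MM"
proof (rule finite_measureI)
  have "emeasure MM (space MM) = emeasure lborel Om"
    by (simp add: emeasure_restrict_space)
  also have "\<dots> \<le> emeasure lborel (cbox (1::real,0::real) (7,2*pi))"
    by (rule emeasure_mono[OF Om_cbox]) simp
  also have "\<dots> < \<infinity>" using emeasure_bounded_finite[OF bounded_cbox] by (simp add: less_top)
  finally show "emeasure MM (space MM) \<noteq> \<infinity>" by simp
qed

interpretation MMf: finite_measure MM by (rule finite_MM)

lemma integrable_MM_iff: "integrable MM f \<longleftrightarrow> set_integrable lborel Om (f::_\<Rightarrow>real)"
  unfolding set_integrable_def by (simp add: integrable_restrict_space)

lemma integral_MM: "integral\<^sup>L MM f = (LINT x:Om|lborel. (f x::real))"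
  unfolding set_lebesgue_integral_def by (simp add: integral_restrict_space)

lemma measurable_MM_iff: "f \<in> borel_measurable MM \<longleftrightarrow> set_borel_measurable lborel Om (f::_\<Rightarrow>real)"
  unfolding set_borel_measurable_def by (simp add: borel_measurable_restrict_space_iff)

lemma cont_integrable_MM:
  assumes "continuous_on (cbox (1,0) (7,2*pi)) (f::real\<times>real\<Rightarrow>real)"
  shows "integrable MM f" "integral\<^sup>L MM f = integral (cbox (1,0) (7,2*pi)) f"
proof -
  have "set_integrable lborel (cbox (1,0) (7,2*pi)) f"
    unfolding set_integrable_def by (rule borel_integrable_compact[OF compact_cbox assms])
  then have si: "set_integrable lborel Om f"
    by (rule set_integrable_subset) (auto simp: Om_cbox)
  then show "integrable MM f" by (simp add: integrable_MM_iff)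
  have "integral\<^sup>L MM f = integral Om f"
    unfolding integral_MM by (rule set_borel_integral_eq_integral(2)[OF si])
  also have "\<dots> = integral (cbox (1,0) (7,2*pi)) f"
    unfolding Om_box by (rule integral_open_interval)
  finally show "integral\<^sup>L MM f = integral (cbox (1,0) (7,2*pi)) f" .
qed

lemma deriv_lin:
  fixes f g :: "real \<Rightarrow> real"
  assumes "f differentiable at x" "g differentiable at x"
  shows "deriv (\<lambda>r. b * f r + c * g r) x = b * deriv f x + c * deriv g x"
proof -
  have "DERIV f x :> deriv f x" "DERIV g x :> deriv g x"
    using assms by (simp_all add: DERIV_deriv_iff_real_differentiable)
  then have "DERIV (\<lambda>r. b * f r + c * g r) x :> b * deriv f x + c * deriv g x"
    by (auto intro!: derivative_eq_intros)
  then show ?thesis by (rule DERIV_imp_deriv)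
qed

lemma pd_lin:
  assumes "smooth f" "smooth g"
  shows "pd bs (\<lambda>x. b * f x + c * g x) = (\<lambda>x. b * pd bs f x + c * pd bs g x)"
proof (induction bs)
  case Nil
  then show ?case by simp
next
  case (Cons a bs)
  have df: "(\<lambda>r. pd bs f (r, t)) differentiable (at R)" "(\<lambda>s. pd bs f (R, s)) differentiable (at t)"
   and dg: "(\<lambda>r. pd bs g (r, t)) differentiable (at R)" "(\<lambda>s. pd bs g (R, s)) differentiable (at t)"
    for R t using assms unfolding smooth_def by blast+
  show ?case
  proof (cases a)
    case True
    show ?thesis using True unfolding pd.simps Cons dR_def
      by (auto simp: fun_eq_iff deriv_lin[OF df(1) dg(1)])
  next
    case False
    show ?thesis using False unfolding pd.simps Cons dT_def
      by (auto simp: fun_eq_iff deriv_lin[OF df(2) dg(2)])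
  qed
qed

lemma smooth_lin:
  assumes "smooth f" "smooth g"
  shows "smooth (\<lambda>x. b * f x + c * g x)"
  unfolding smooth_def pd_lin[OF assms]
proof (intro allI conjI)
  fix bs R t
  have "continuous_on UNIV (pd bs f)" "continuous_on UNIV (pd bs g)"
    using assms unfolding smooth_def by blast+
  then show "continuous_on UNIV (\<lambda>x. b * pd bs f x + c * pd bs g x)"
    by (intro continuous_intros)
  have df: "(\<lambda>r. pd bs f (r, t)) differentiable (at R)" "(\<lambda>s. pd bs f (R, s)) differentiable (at t)"
   and dg: "(\<lambda>r. pd bs g (r, t)) differentiable (at R)" "(\<lambda>s. pd bs g (R, s)) differentiable (at t)"
    using assms unfolding smooth_def by blast+
  show "(\<lambda>r. b * pd bs f (r, t) + c * pd bs g (r, t)) differentiable at R"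
    using df(1) dg(1) by (intro differentiable_add differentiable_mult) auto
  show "(\<lambda>s. b * pd bs f (R, s) + c * pd bs g (R, s)) differentiable at t"
    using df(2) dg(2) by (intro differentiable_add differentiable_mult) auto
qed

lemma test_lin:
  assumes "test f" "test g"
  shows "test (\<lambda>x. b * f x + c * g x)"
proof -
  obtain d1 where d1: "d1 > 0" "\<And>R t. (R \<le> 1 + d1 \<or> 7 - d1 \<le> R) \<Longrightarrow> f (R, t) = 0"
    using assms(1) unfolding test_def by blast
  obtain d2 where d2: "d2 > 0" "\<And>R t. (R \<le> 1 + d2 \<or> 7 - d2 \<le> R) \<Longrightarrow> g (R, t) = 0"
    using assms(2) unfolding test_def by blast
  have "\<forall>R t. (R \<le> 1 + min d1 d2 \<or> 7 - min d1 d2 \<le> R) \<longrightarrow> b * f (R, t) + c * g (R, t) = 0"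
    using d1 d2 by (auto simp: min_def split: if_splits)
  moreover have "min d1 d2 > 0" using d1 d2 by simp
  moreover have "smooth (\<lambda>x. b * f x + c * g x)"
    using assms by (intro smooth_lin) (auto simp: test_def)
  moreover have "\<forall>R t. b * f (R, t + 2*pi) + c * g (R, t + 2*pi) = b * f (R, t) + c * g (R, t)"
    using assms by (simp add: test_def)
  ultimately show ?thesis
    unfolding test_def by blast
qed

lemma pd_zero: "pd bs (\<lambda>x. 0) = (\<lambda>x. 0)"
  by (induction bs) (auto simp: dR_def dT_def fun_eq_iff)

lemma test_zero: "test (\<lambda>x. 0)"
proof -
  have "smooth (\<lambda>x. 0)" unfolding smooth_def pd_zero by simp
  moreover have "\<exists>\<delta>::real>0. \<forall>R t. (R \<le> 1 + \<delta> \<or> 7 - \<delta> \<le> R) \<longrightarrow> (0::real) = 0"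
    by (rule exI[of _ 1]) simp
  ultimately show ?thesis unfolding test_def by simp
qed

lemma test_cont:
  assumes "test f"
  shows "continuous_on UNIV f" "continuous_on UNIV (dR f)" "continuous_on UNIV (dT f)"
proof -
  have "pd [] f = f" "pd [True] f = dR f" "pd [False] f = dT f" by simp_all
  then show "continuous_on UNIV f" "continuous_on UNIV (dR f)" "continuous_on UNIV (dT f)"
    using assms unfolding test_def smooth_def by metis+
qed

lemma test_DERIV:
  assumes "test f"
  shows "((\<lambda>r. f (r, t)) has_real_derivative dR f (R, t)) (at R)"
        "((\<lambda>s. f (R, s)) has_real_derivative dT f (R, t)) (at t)"
proof -
  have "(\<lambda>r. pd [] f (r, t)) differentiable (at R)" "(\<lambda>s. pd [] f (R, s)) differentiable (at t)"
    using assms unfolding test_def smooth_def by blast+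
  then show "((\<lambda>r. f (r, t)) has_real_derivative dR f (R, t)) (at R)"
        "((\<lambda>s. f (R, s)) has_real_derivative dT f (R, t)) (at t)"
    by (simp_all add: dR_def dT_def DERIV_deriv_iff_real_differentiable)
qed

lemma test_vanish:
  assumes "test f"
  obtains d where "d > 0" "\<And>x. fst x \<le> 1 + d \<or> 7 - d \<le> fst x \<Longrightarrow> f x = 0 \<and> dR f x = 0 \<and> dT f x = 0"
proof -
  obtain d0 where d0: "d0 > 0" "\<And>R t. (R \<le> 1 + d0 \<or> 7 - d0 \<le> R) \<Longrightarrow> f (R, t) = 0"
    using assms unfolding test_def by blast
  have "f (R, t) = 0 \<and> dR f (R, t) = 0 \<and> dT f (R, t) = 0"
    if "R \<le> 1 + d0/2 \<or> 7 - d0/2 \<le> R" for R t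
  proof -
    have f0: "f (R, t) = 0" using d0(2)[of R t] that d0(1) by force
    have "(\<lambda>s. f (R, s)) = (\<lambda>s. 0)" using d0(2)[of R] that d0(1) by (force simp: fun_eq_iff)
    then have T0: "dT f (R, t) = 0" by (simp add: dT_def)
    let ?S = "{r. r < 1 + d0} \<union> {r. 7 - d0 < r}"
    have "open ?S" by (intro open_Un open_Collect_less continuous_intros) 
    moreover have "R \<in> ?S" using that d0 by auto
    moreover have "0 = f (r, t)" if "r \<in> ?S" for r using that d0(2)[of r t] by force
    ultimately have "((\<lambda>r. f (r, t)) has_real_derivative 0) (at R)"
      using has_field_derivative_transform_within_open[of "\<lambda>r. 0" 0 R ?S "\<lambda>r. f (r, t)"] by simp
    then have "dR f (R, t) = 0" by (simp add: dR_def DERIV_imp_deriv)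
    with f0 T0 show ?thesis by simp
  qed
  note * = this
  show ?thesis
  proof (rule that[of "d0/2"])
    show "d0/2 > 0" using d0 by simp
    fix x :: "real \<times> real" assume "fst x \<le> 1 + d0/2 \<or> 7 - d0/2 \<le> fst x"
    then show "f x = 0 \<and> dR f x = 0 \<and> dT f x = 0" using *[of "fst x" "snd x"] by simp
  qed
qed

definition tU :: "(real \<times> real \<Rightarrow> real) \<Rightarrow> real \<times> real \<Rightarrow> real \<times> real \<times> real" where
  "tU f = (\<lambda>x. (f x, dR f x, dT f x))"

lemma dR_lin:
  assumes "test f" "test g"
  shows "dR (\<lambda>x. b * f x + c * g x) = (\<lambda>x. b * dR f x + c * dR g x)"
  using pd_lin[of f g "[True]" b c] assms unfolding test_def by simp

lemma dT_lin:
  assumes "test f" "test g"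
  shows "dT (\<lambda>x. b * f x + c * g x) = (\<lambda>x. b * dT f x + c * dT g x)"
  using pd_lin[of f g "[False]" b c] assms unfolding test_def by simp

lemma tU_lin:
  assumes "test f" "test g"
  shows "tU (\<lambda>x. b * f x + c * g x) = (\<lambda>x. b *\<^sub>R tU f x + c *\<^sub>R tU g x)"
  unfolding tU_def dR_lin[OF assms] dT_lin[OF assms] by (simp add: fun_eq_iff)

lemma tU_cont: "test f \<Longrightarrow> continuous_on UNIV (tU f)"
  unfolding tU_def using test_cont by (intro continuous_on_Pair) auto

lemma cont_vanish:
  fixes f :: "real \<times> real \<Rightarrow> real"
  assumes "continuous_on {x. 1 < fst x \<and> fst x < 7} f" "d > 0"
    "\<And>x. fst x \<le> 1 + d \<or> 7 - d \<le> fst x \<Longrightarrow> f x = 0"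
  shows "continuous_on UNIV f"
proof (rule continuous_at_imp_continuous_on, intro ballI)
  fix x :: "real \<times> real"
  let ?A = "{x::real\<times>real. 1 < fst x \<and> fst x < 7}"
  let ?B = "{x::real\<times>real. fst x < 1 + d} \<union> {x. 7 - d < fst x}"
  have oA: "open ?A" by (intro open_Collect_conj open_Collect_less continuous_intros)
  have oB: "open ?B" by (intro open_Un open_Collect_less continuous_intros)
  show "isCont f x"
  proof (cases "x \<in> ?A")
    case True
    then show ?thesis using assms(1) oA continuous_on_eq_continuous_at by blast
  next
    case False
    then have xB: "x \<in> ?B" using assms(2) by auto
    have "continuous_on ?B (\<lambda>x. 0::real)" by simp
    moreover have "\<forall>y\<in>?B. 0 = f y" using assms(3) by force
    ultimately have "continuous_on ?B f" using continuous_on_eq[of ?B "\<lambda>x. 0" f] by blast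
    then show ?thesis using oB xB continuous_on_eq_continuous_at by blast
  qed
qed

lemma ibp_R:
  fixes hh D :: "real \<times> real \<Rightarrow> real"
  assumes "continuous_on UNIV D"
    "\<And>R t. ((\<lambda>r. hh (r, t)) has_real_derivative D (R, t)) (at R)"
    "\<And>t. hh (1, t) = 0" "\<And>t. hh (7, t) = 0"
  shows "integral\<^sup>L MM D = 0"
proof -
  have c: "continuous_on (cbox (1,0) (7,2*pi)) D" using assms(1) by (rule continuous_on_subset) simp
  have "integral\<^sup>L MM D = integral (cbox (1,0) (7,2*pi)) D"
    using cont_integrable_MM[OF c] by simp
  also have "\<dots> = integral (cbox 1 7) (\<lambda>R. integral (cbox 0 (2*pi)) (\<lambda>t. D (R, t)))"
    by (rule integral_prod_continuous[OF c])
  also have "\<dots> = integral (cbox 0 (2*pi)) (\<lambda>t. integral (cbox 1 7) (\<lambda>R. D (R, t)))"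
    by (rule integral_swap_continuous[where f = "\<lambda>R t. D (R, t)"]) (simp add: c)
  also have "\<dots> = integral (cbox 0 (2*pi)) (\<lambda>t. 0::real)"
  proof (rule integral_cong)
    fix t
    have "((\<lambda>R. D (R, t)) has_integral (hh (7, t) - hh (1, t))) {1..7}"
    proof (rule fundamental_theorem_of_calculus_interior)
      show "continuous_on {1..7} (\<lambda>r. hh (r, t))"
        by (rule continuous_at_imp_continuous_on) (auto intro: DERIV_isCont[OF assms(2)])
      show "((\<lambda>r. hh (r, t)) has_vector_derivative D (x, t)) (at x)" for x
        using assms(2) has_real_derivative_iff_has_vector_derivative by blast
    qed simp
    then show "integral (cbox 1 7) (\<lambda>R. D (R, t)) = 0"
      using assms(3,4) by (simp add: integral_unique)
  qed
  also have "\<dots> = 0" by simp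
  finally show ?thesis .
qed

lemma ibp_T:
  fixes hh D :: "real \<times> real \<Rightarrow> real"
  assumes "continuous_on UNIV D"
    "\<And>R t. ((\<lambda>s. hh (R, s)) has_real_derivative D (R, t)) (at t)"
    "\<And>R. hh (R, 2*pi) = hh (R, 0)"
  shows "integral\<^sup>L MM D = 0"
proof -
  have c: "continuous_on (cbox (1,0) (7,2*pi)) D" using assms(1) by (rule continuous_on_subset) simp
  have "integral\<^sup>L MM D = integral (cbox (1,0) (7,2*pi)) D"
    using cont_integrable_MM[OF c] by simp
  also have "\<dots> = integral (cbox 1 7) (\<lambda>R. integral (cbox 0 (2*pi)) (\<lambda>t. D (R, t)))"
    by (rule integral_prod_continuous[OF c])
  also have "\<dots> = integral (cbox 1 (7::real)) (\<lambda>R. 0::real)"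
  proof (rule integral_cong)
    fix R
    have "((\<lambda>t. D (R, t)) has_integral (hh (R, 2*pi) - hh (R, 0))) {0..2*pi}"
    proof (rule fundamental_theorem_of_calculus_interior)
      show "continuous_on {0..2*pi} (\<lambda>s. hh (R, s))"
        by (rule continuous_at_imp_continuous_on) (auto intro: DERIV_isCont[OF assms(2)])
      show "((\<lambda>s. hh (R, s)) has_vector_derivative D (R, x)) (at x)" for x
        using assms(2) has_real_derivative_iff_has_vector_derivative by blast
    qed simp
    then show "integral (cbox 0 (2*pi)) (\<lambda>t. D (R, t)) = 0"
      using assms(3) by (simp add: integral_unique)
  qed
  also have "\<dots> = 0" by simp
  finally show ?thesis .
qed

lemma test_cont_integrable:
  "continuous_on UNIV (f::real\<times>real\<Rightarrow>real) \<Longrightarrow> integrable MM f"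
  by (rule cont_integrable_MM(1)) (rule continuous_on_subset, auto)

lemma test_end0:
  assumes "test f" shows "f (1, t) = 0" "f (7, t) = 0"
proof -
  obtain d where d: "d > 0" "\<And>R t. (R \<le> 1 + d \<or> 7 - d \<le> R) \<Longrightarrow> f (R, t) = 0"
    using assms unfolding test_def by blast
  show "f (1, t) = 0" using d(1) d(2)[of 1 t] by simp
  show "f (7, t) = 0" using d(1) d(2)[of 7 t] by simp
qed

lemma test_per:
  assumes "test f" shows "f (R, 2*pi) = f (R, 0)"
proof -
  have "\<forall>R t. f (R, t + 2*pi) = f (R, t)" using assms unfolding test_def by blast
  then show ?thesis by (metis add_0)
qed

lemma weak_R:
  assumes f: "test f" and g: "test g"
  shows "integral\<^sup>L MM (\<lambda>x. f x * dR g x) = - integral\<^sup>L MM (\<lambda>x. dR f x * g x)"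
proof -
  let ?D = "\<lambda>x. dR f x * g x + f x * dR g x"
  have cD: "continuous_on UNIV ?D" using test_cont[OF f] test_cont[OF g] by (intro continuous_intros)
  have "integral\<^sup>L MM ?D = 0"
  proof (rule ibp_R[OF cD, where hh = "\<lambda>x. f x * g x"])
    show "((\<lambda>r. f (r, t) * g (r, t)) has_real_derivative ?D (R, t)) (at R)" for R t
      using test_DERIV(1)[OF f, of t R] test_DERIV(1)[OF g, of t R]
      by (auto intro!: derivative_eq_intros)
  qed (simp_all add: test_end0[OF f])
  moreover have "integral\<^sup>L MM ?D = integral\<^sup>L MM (\<lambda>x. dR f x * g x) + integral\<^sup>L MM (\<lambda>x. f x * dR g x)"
    using test_cont[OF f] test_cont[OF g]
    by (intro Bochner_Integration.integral_add test_cont_integrable continuous_intros)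
  ultimately show ?thesis by simp
qed

lemma weak_T:
  assumes f: "test f" and g: "test g"
  shows "integral\<^sup>L MM (\<lambda>x. f x * dT g x) = - integral\<^sup>L MM (\<lambda>x. dT f x * g x)"
proof -
  let ?D = "\<lambda>x. dT f x * g x + f x * dT g x"
  have cD: "continuous_on UNIV ?D" using test_cont[OF f] test_cont[OF g] by (intro continuous_intros)
  have "integral\<^sup>L MM ?D = 0"
  proof (rule ibp_T[OF cD, where hh = "\<lambda>x. f x * g x"])
    show "((\<lambda>s. f (R, s) * g (R, s)) has_real_derivative ?D (R, t)) (at t)" for R t
      using test_DERIV(2)[OF f, of R t] test_DERIV(2)[OF g, of R t]
      by (auto intro!: derivative_eq_intros)
  qed (simp_all add: test_per[OF f] test_per[OF g])
  moreover have "integral\<^sup>L MM ?D = integral\<^sup>L MM (\<lambda>x. dT f x * g x) + integral\<^sup>L MM (\<lambda>x. f x * dT g x)"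
    using test_cont[OF f] test_cont[OF g]
    by (intro Bochner_Integration.integral_add test_cont_integrable continuous_intros)
  ultimately show ?thesis by simp
qed

definition gH :: "real \<Rightarrow> real" where "gH R = (R - 4) / ((R - 1) * (7 - R))"
definition gH' :: "real \<Rightarrow> real" where "gH' R = (R^2 - 8*R + 25) / ((R - 1) * (7 - R))^2"

lemma hardy_alg:
  assumes "1 < R" "R < 7"
  shows "v^2 - u^2 / (rho R)^2 / 4 = (v + gH R * u)^2 - (gH' R * u^2 + 2 * gH R * u * v)"
proof -
  have P: "(R - 1) * (7 - R) \<noteq> 0" using assms by simp
  have gen: "v^2 - u^2/(pp/6)^2/4 = (v + qq/pp*u)^2 - ((qq^2+9)/pp^2*u^2 + 2 * (qq/pp) * u * v)"
    if "pp \<noteq> 0" for pp qq :: real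
    using that by (simp add: field_simps power2_eq_square)
  have "R^2 - 8*R + 25 = (R-4)^2 + 9" by (simp add: power2_eq_square algebra_simps)
  then show ?thesis unfolding gH_def gH'_def rho_def
    using gen[OF P, of "R - 4"] by simp
qed

lemma gH_deriv:
  assumes "1 < R" "R < 7"
  shows "(gH has_real_derivative gH' R) (at R)"
proof -
  have P: "(R - 1) * (7 - R) \<noteq> 0" using assms by simp
  have "((\<lambda>r. (r - 4) / ((r - 1) * (7 - r))) has_real_derivative
         ((1 * ((R - 1) * (7 - R)) - (R - 4) * ((1 - 0) * (7 - R) + (R - 1) * (0 - 1))) / ((R - 1) * (7 - R))^2)) (at R)"
    using P by (intro derivative_eq_intros DERIV_quotient) (auto simp: power2_eq_square)
  moreover have "(1 * ((R - 1) * (7 - R)) - (R - 4) * ((1 - 0) * (7 - R) + (R - 1) * (0 - 1))) = R^2 - 8*R + 25"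
    by (simp add: algebra_simps power2_eq_square)
  ultimately show ?thesis unfolding gH_def gH'_def by (simp add: fun_eq_iff)
qed

lemma hardy_test:
  assumes psi: "test \<psi>"
  shows "integrable MM (\<lambda>x. (\<psi> x)^2 / (rho (fst x))^2)"
    "integral\<^sup>L MM (\<lambda>x. (\<psi> x)^2 / (rho (fst x))^2) \<le> 4 * integral\<^sup>L MM (\<lambda>x. (dR \<psi> x)^2)"
proof -
  obtain d where d: "d > 0" "\<And>x. fst x \<le> 1 + d \<or> 7 - d \<le> fst x \<Longrightarrow> \<psi> x = 0 \<and> dR \<psi> x = 0 \<and> dT \<psi> x = 0"
    using test_vanish[OF psi] by blast
  have d2: "\<psi> (R, t) = 0" "dR \<psi> (R, t) = 0" if "R \<le> 1 + d \<or> 7 - d \<le> R" for R t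
    using d(2)[of "(R,t)"] that by auto
  let ?A = "{x::real\<times>real. 1 < fst x \<and> fst x < 7}"
  have cpsi: "continuous_on UNIV \<psi>" "continuous_on UNIV (dR \<psi>)" using test_cont[OF psi] by auto
  have Pnz: "(fst x - 1) * (7 - fst x) \<noteq> 0" if "x \<in> ?A" for x using that by auto
  have rnz: "rho (fst x) \<noteq> 0" if "x \<in> ?A" for x using that rho_pos[of "fst x"] by auto
  define D where "D x = (if 1 < fst x \<and> fst x < 7 then gH' (fst x) * (\<psi> x)^2 + 2 * gH (fst x) * \<psi> x * dR \<psi> x else 0)" for x
  define E where "E x = (dR \<psi> x + gH (fst x) * \<psi> x)^2" for x
  define Q where "Q x = (\<psi> x)^2 / (rho (fst x))^2" for x
  have cD: "continuous_on UNIV D"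
  proof (rule cont_vanish[OF _ d(1)])
    have "continuous_on ?A (\<lambda>x. gH' (fst x) * (\<psi> x)^2 + 2 * gH (fst x) * \<psi> x * dR \<psi> x)"
      unfolding gH_def gH'_def using cpsi Pnz
      by (intro continuous_intros continuous_on_subset[OF cpsi(1)] continuous_on_subset[OF cpsi(2)]) auto
    then show "continuous_on ?A D"
      by (rule continuous_on_eq) (simp add: D_def)
    show "D x = 0" if "fst x \<le> 1 + d \<or> 7 - d \<le> fst x" for x
      using d(2)[OF that] by (simp add: D_def)
  qed
  have cE: "continuous_on UNIV E"
  proof (rule cont_vanish[OF _ d(1)])
    show "continuous_on ?A E"
      unfolding E_def gH_def using cpsi Pnz
      by (intro continuous_intros continuous_on_subset[OF cpsi(1)] continuous_on_subset[OF cpsi(2)]) auto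
    show "E x = 0" if "fst x \<le> 1 + d \<or> 7 - d \<le> fst x" for x
      using d(2)[OF that] by (simp add: E_def)
  qed
  have cQ: "continuous_on UNIV Q"
  proof (rule cont_vanish[OF _ d(1)])
    show "continuous_on ?A Q"
      unfolding Q_def rho_def using cpsi Pnz
      by (intro continuous_intros continuous_on_subset[OF cpsi(1)]) auto
    show "Q x = 0" if "fst x \<le> 1 + d \<or> 7 - d \<le> fst x" for x
      using d(2)[OF that] by (simp add: Q_def)
  qed
  have D0: "integral\<^sup>L MM D = 0"
  proof (rule ibp_R[OF cD, where hh = "\<lambda>x. gH (fst x) * (\<psi> x)^2"])
    fix R t
    show "((\<lambda>r. gH (fst (r, t)) * (\<psi> (r, t))^2) has_real_derivative D (R, t)) (at R)"
    proof (cases "1 < R \<and> R < 7")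
      case True
      have "((\<lambda>r. gH r * (\<psi> (r, t))^2) has_real_derivative
              gH' R * (\<psi> (R, t))^2 + gH R * (2 * \<psi> (R, t) * dR \<psi> (R, t))) (at R)"
        using gH_deriv[of R] True test_DERIV(1)[OF psi, of t R]
        by (auto intro!: derivative_eq_intros simp: power2_eq_square)
      then show ?thesis using True by (simp add: D_def algebra_simps)
    next
      case False
      let ?S = "{r. r < 1 + d} \<union> {r. 7 - d < r}"
      have "open ?S" by (intro open_Un open_Collect_less continuous_intros)
      moreover have "R \<in> ?S" using False d(1) by auto
      moreover have "0 = gH r * (\<psi> (r, t))^2" if "r \<in> ?S" for r using that d2[of r t] by auto
      ultimately have "((\<lambda>r. gH r * (\<psi> (r, t))^2) has_real_derivative 0) (at R)"
        using has_field_derivative_transform_within_open[of "\<lambda>r. 0" 0 R ?S "\<lambda>r. gH r * (\<psi> (r, t))^2"] by simp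
      then show ?thesis using False by (auto simp: D_def)
    qed
  qed (simp_all add: test_end0[OF psi])
  have iD: "integrable MM D" "integrable MM E" "integrable MM Q"
    using cD cE cQ by (auto intro: test_cont_integrable)
  have iR: "integrable MM (\<lambda>x. (dR \<psi> x)^2)"
    using cpsi by (intro test_cont_integrable continuous_intros)
  show "integrable MM (\<lambda>x. (\<psi> x)^2 / (rho (fst x))^2)" using iD(3) unfolding Q_def .
  have "integral\<^sup>L MM (\<lambda>x. (dR \<psi> x)^2 - Q x / 4) = integral\<^sup>L MM (\<lambda>x. E x - D x)"
  proof (rule Bochner_Integration.integral_cong[OF refl])
    fix x assume "x \<in> space MM"
    then have "1 < fst x" "fst x < 7" using Om_fst by auto
    then show "(dR \<psi> x)^2 - Q x / 4 = E x - D x"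
      unfolding Q_def E_def D_def using hardy_alg[of "fst x" "dR \<psi> x" "\<psi> x"] by simp
  qed
  also have "\<dots> = integral\<^sup>L MM E - integral\<^sup>L MM D" using iD by simp
  also have "\<dots> \<ge> 0" using D0 by (simp add: E_def)
  finally have "0 \<le> integral\<^sup>L MM (\<lambda>x. (dR \<psi> x)^2 - Q x / 4)" .
  also have "\<dots> = integral\<^sup>L MM (\<lambda>x. (dR \<psi> x)^2) - integral\<^sup>L MM Q / 4"
    using iD iR by simp
  finally show "integral\<^sup>L MM (\<lambda>x. (\<psi> x)^2 / (rho (fst x))^2) \<le> 4 * integral\<^sup>L MM (\<lambda>x. (dR \<psi> x)^2)"
    unfolding Q_def by simp
qed

lemma rho_cont: "continuous_on UNIV rho" unfolding rho_def by (intro continuous_intros) auto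

lemma rho_meas[measurable]: "rho \<in> borel_measurable borel"
  using rho_cont by (intro borel_measurable_continuous_onI)

lemma arith_bound:
  fixes l B P R :: real
  assumes "0 \<le> l^2 * P + 2 * l * B + R" "0 \<le> l^2 * P - 2 * l * B + R" "l > 0"
  shows "\<bar>B\<bar> \<le> (l * P + R / l) / 2"
proof -
  have "\<bar>B\<bar> * (2 * l) \<le> l^2 * P + R" using assms by (cases "B \<ge> 0") (auto simp: algebra_simps)
  then have "\<bar>B\<bar> \<le> (l^2 * P + R) / (2 * l)" using assms by (simp add: pos_le_divide_eq)
  also have "\<dots> = (l * P + R / l) / 2" using assms by (simp add: field_simps power2_eq_square)
  finally show ?thesis .
qed

lemma arith_Kc:
  fixes A B C k1 k2 k3 K :: real
  assumes "0 \<le> A" "0 \<le> B" "0 \<le> C" "k1 \<le> K" "k2 \<le> K" "k3 \<le> K"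
  shows "k1 * A + k2 * B + k3 * C \<le> K * (B + C + A)"
proof -
  have "k1 * A \<le> K * A" "k2 * B \<le> K * B" "k3 * C \<le> K * C"
    using assms by (auto intro: mult_right_mono)
  then show ?thesis by (simp add: algebra_simps)
qed

lemma meas_c1: "U \<in> borel_measurable M \<Longrightarrow> (\<lambda>x. fst (U x :: real \<times> real \<times> real)) \<in> borel_measurable M"
  by (erule measurable_compose) (intro borel_measurable_continuous_onI continuous_intros)
lemma meas_c2: "U \<in> borel_measurable M \<Longrightarrow> (\<lambda>x. fst (snd (U x :: real \<times> real \<times> real))) \<in> borel_measurable M"
  by (erule measurable_compose) (intro borel_measurable_continuous_onI continuous_intros)
lemma meas_c3: "U \<in> borel_measurable M \<Longrightarrow> (\<lambda>x. snd (snd (U x :: real \<times> real \<times> real))) \<in> borel_measurable M"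
  by (erule measurable_compose) (intro borel_measurable_continuous_onI continuous_intros)
lemma meas_fstMM[measurable]: "(\<lambda>x. fst x) \<in> borel_measurable MM"
proof -
  have "(\<lambda>x::real\<times>real. fst x) \<in> borel_measurable borel"
    by (intro borel_measurable_continuous_onI continuous_intros)
  then have "(\<lambda>x::real\<times>real. fst x) \<in> borel_measurable lborel" by simp
  then show ?thesis by (rule measurable_restrict_space1)
qed

lemma norm3: "(norm (v::real\<times>real\<times>real))^2 = (fst v)^2 + (fst (snd v))^2 + (snd (snd v))^2"
  by (cases v) (simp add: norm_Pair)

locale setting =
  fixes a c :: real
  assumes a4: "a \<ge> 4" and c0: "c > 0"
begin

definition Bf :: "real \<times> real \<Rightarrow> real \<times> real \<times> real \<Rightarrow> real \<times> real \<times> real \<Rightarrow> real" where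
  "Bf x u v = (fst (snd u) * fst (snd v) + snd (snd u) * snd (snd v) / (fst x + a - 4)^2
       + c / (rho (fst x))^2 * fst u * fst v) * (fst x + a - 4)"

abbreviation Qf :: "real \<times> real \<Rightarrow> real \<times> real \<times> real \<Rightarrow> real" where
  "Qf x v \<equiv> Bf x v v"

definition Kc :: real where "Kc = a + 4 + 9 / (4 * c)"

lemma Kc_pos: "Kc > 0" unfolding Kc_def using a4 c0 by (simp add: add_pos_nonneg)

lemma Bf_sym: "Bf x u v = Bf x v u"
  unfolding Bf_def by (simp add: algebra_simps)

lemma Bf_add1: "Bf x (u + u') v = Bf x u v + Bf x u' v"
  unfolding Bf_def by (simp add: algebra_simps add_divide_distrib)

lemma Bf_scale1: "Bf x (r *\<^sub>R u) v = r * Bf x u v"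
  unfolding Bf_def by (simp add: algebra_simps)

lemma Bf_diff1: "Bf x (u - u') v = Bf x u v - Bf x u' v"
  unfolding Bf_def by (simp add: algebra_simps diff_divide_distrib)

lemma Bf_add2: "Bf x v (u + u') = Bf x v u + Bf x v u'"
  using Bf_add1 Bf_sym by metis

lemma Bf_diff2: "Bf x v (u - u') = Bf x v u - Bf x v u'"
  using Bf_diff1 Bf_sym by metis

lemma Bf_scale2: "Bf x v (r *\<^sub>R u) = r * Bf x v u"
  using Bf_scale1 Bf_sym by metis

lemma Bf_zero1[simp]: "Bf x 0 v = 0" unfolding Bf_def by simp
lemma Bf_zero2[simp]: "Bf x v 0 = 0" unfolding Bf_def by simp

lemma Bf_cont: "continuous_on UNIV (\<lambda>v. Bf x v v')"
  unfolding Bf_def divide_inverse by (intro continuous_intros)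

lemma Bf_meas[measurable]:
  assumes "U \<in> borel_measurable MM" "V \<in> borel_measurable MM"
  shows "(\<lambda>x. Bf x (U x) (V x)) \<in> borel_measurable MM"
proof -
  note [measurable] = meas_c1[OF assms(1)] meas_c2[OF assms(1)] meas_c3[OF assms(1)]
     meas_c1[OF assms(2)] meas_c2[OF assms(2)] meas_c3[OF assms(2)] meas_fstMM
  show ?thesis unfolding Bf_def by measurable
qed

context
  fixes x :: "real \<times> real"
  assumes xO: "x \<in> Om"
begin

lemma w_bounds: "1 \<le> fst x + a - 4" "fst x + a - 4 \<le> a + 3"
  using Om_fst[OF xO] a4 by auto

lemma rho_bounds: "0 < rho (fst x)" "rho (fst x) \<le> 3/2"
  using Om_fst[OF xO] rho_pos rho_le by auto

lemma Qf_nonneg: "0 \<le> Qf x v"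
proof -
  have "0 \<le> fst (snd v) * fst (snd v) + snd (snd v) * snd (snd v) / (fst x + a - 4)^2
       + c / (rho (fst x))^2 * fst v * fst v"
    using c0 by (intro add_nonneg_nonneg) (auto simp: mult.assoc)
  then show ?thesis unfolding Bf_def using w_bounds by simp
qed

lemma Qf_expand: "Qf x (r *\<^sub>R u + v) = r^2 * Qf x u + 2 * r * Bf x u v + Qf x v"
  by (simp add: Bf_add1 Bf_add2 Bf_scale1 Bf_scale2 Bf_sym[of x v u] power2_eq_square algebra_simps)

lemma Bf_bound:
  assumes "l > 0"
  shows "\<bar>Bf x u v\<bar> \<le> (l * Qf x u + Qf x v / l) / 2"
proof -
  have 1: "0 \<le> Qf x (l *\<^sub>R u + v)" "0 \<le> Qf x ((- l) *\<^sub>R u + v)" by (rule Qf_nonneg)+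
  have e1: "Qf x (l *\<^sub>R u + v) = l^2 * Qf x u + 2 * l * Bf x u v + Qf x v" by (rule Qf_expand)
  have e2: "Qf x ((- l) *\<^sub>R u + v) = l^2 * Qf x u - 2 * l * Bf x u v + Qf x v"
    unfolding Qf_expand by simp
  show ?thesis using 1 e1 e2 assms arith_bound by simp
qed

lemma Bf_bound1: "\<bar>Bf x u v\<bar> \<le> (Qf x u + Qf x v) / 2"
  using Bf_bound[of 1] by simp

lemma Qf_add: "Qf x (u + v) \<le> 2 * Qf x u + 2 * Qf x v"
proof -
  have "Qf x (u + v) + Qf x (u - v) = 2 * Qf x u + 2 * Qf x v"
    by (simp add: Bf_add1 Bf_add2 Bf_diff1 Bf_diff2 Bf_sym[of x v u])
  moreover have "0 \<le> Qf x (u - v)" by (rule Qf_nonneg)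
  ultimately show ?thesis by linarith
qed

lemma Qf_diff: "Qf x (u - v) \<le> 2 * Qf x u + 2 * Qf x v"
  using Qf_add[of u "- v"] by (simp add: Bf_def)

lemma Qf_parallel: "Qf x (u - v) = 2 * Qf x u + 2 * Qf x v - 4 * Qf x ((1/2) *\<^sub>R (u + v))"
  by (simp add: Bf_add1 Bf_add2 Bf_diff1 Bf_diff2 Bf_scale1 Bf_scale2 Bf_sym[of x v u]) (simp add: field_simps)

lemma Qf_coer: "(norm v)^2 \<le> Kc * Qf x v"
proof -
  obtain v1 v2 v3 where v: "v = (v1, v2, v3)" by (cases v) auto
  define w where "w = fst x + a - 4"
  define r where "r = rho (fst x)"
  have w: "1 \<le> w" "w \<le> a + 3" using w_bounds unfolding w_def by auto
  have r: "0 < r" "r \<le> 3/2" using rho_bounds unfolding r_def by auto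
  have Q: "Qf x v = v2^2 * w + v3^2 / w + c * v1^2 / r^2 * w"
    unfolding v Bf_def w_def[symmetric] r_def[symmetric] using w
    by (simp add: power2_eq_square field_simps)
  have t1: "v2^2 \<le> v2^2 * w" using w by (simp add: mult_le_cancel_left1)
  have t2: "v3^2 \<le> (a+3) * (v3^2 / w)"
  proof -
    have "v3^2 = (v3^2 / w) * w" using w by simp
    also have "\<dots> \<le> (v3^2 / w) * (a+3)" using w by (intro mult_left_mono) auto
    finally show ?thesis by (simp add: mult.commute)
  qed
  have t3: "v1^2 \<le> 9 / (4 * c) * (c * v1^2 / r^2 * w)"
  proof -
    have "r^2 \<le> 9/4" using r power_mono[of r "3/2" 2] by (simp add: power2_eq_square)
    then have "v1^2 * r^2 \<le> v1^2 * (9/4)" by (intro mult_left_mono) auto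
    also have "\<dots> \<le> v1^2 * (9/4) * w" using w by (simp add: mult_le_cancel_left1)
    finally have "v1^2 \<le> v1^2 * (9/4) * w / r^2" using r by (simp add: field_simps)
    also have "\<dots> = 9 / (4 * c) * (c * v1^2 / r^2 * w)" using c0 by (simp add: field_simps)
    finally show ?thesis .
  qed
  have nn: "0 \<le> v2^2 * w" "0 \<le> v3^2 / w" "0 \<le> c * v1^2 / r^2 * w" using w c0 by auto
  have "(norm v)^2 = v1^2 + v2^2 + v3^2" unfolding v by (simp add: norm3)
  also have "\<dots> \<le> 9 / (4 * c) * (c * v1^2 / r^2 * w) + v2^2 * w + (a+3) * (v3^2 / w)"
    using t1 t2 t3 by linarith
  also have "\<dots> \<le> Kc * (v2^2 * w + v3^2 / w + c * v1^2 / r^2 * w)"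
    using arith_Kc[OF nn(3) nn(1) nn(2), of "9 / (4 * c)" Kc 1 "a+3"] unfolding Kc_def using a4 c0
    by (simp add: add_pos_nonneg)
  finally show ?thesis unfolding Q .
qed

lemma Qf_upper: "Qf x v \<le> (a + 3) * ((fst (snd v))^2 + (snd (snd v))^2 + c * (fst v)^2 / (rho (fst x))^2)"
proof -
  obtain v1 v2 v3 where v: "v = (v1, v2, v3)" by (cases v) auto
  define w where "w = fst x + a - 4"
  define r where "r = rho (fst x)"
  have w: "1 \<le> w" "w \<le> a + 3" using w_bounds unfolding w_def by auto
  have r: "0 < r" using rho_bounds unfolding r_def by auto
  have Q: "Qf x v = v2^2 * w + v3^2 / w + c * v1^2 / r^2 * w"
    unfolding v Bf_def w_def[symmetric] r_def[symmetric] using w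
    by (simp add: power2_eq_square field_simps)
  have "v2^2 * w \<le> (a+3) * v2^2" using w by (simp add: mult.commute[of _ w] mult_right_mono)
  moreover have "v3^2 / w \<le> (a+3) * v3^2"
  proof -
    have "v3^2 / w \<le> v3^2" using w by (simp add: divide_le_eq mult_le_cancel_left1)
    also have "\<dots> \<le> (a+3) * v3^2" using a4 by (simp add: mult_le_cancel_right1)
    finally show ?thesis .
  qed
  moreover have "c * v1^2 / r^2 * w \<le> (a+3) * (c * v1^2 / r^2)"
  proof -
    have "0 \<le> c * v1^2 / r^2" using c0 by simp
    then have "c * v1^2 / r^2 * w \<le> c * v1^2 / r^2 * (a+3)" using w by (intro mult_left_mono) auto
    then show ?thesis by (simp add: mult.commute)
  qed
  ultimately have "Qf x v \<le> (a+3) * v2^2 + (a+3) * v3^2 + (a+3) * (c * v1^2 / r^2)"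
    unfolding Q by linarith
  then show ?thesis by (simp add: v r_def distrib_left)
qed

end

end

lemma int_dom:
  fixes f g :: "real \<times> real \<Rightarrow> real"
  assumes "integrable MM g" "f \<in> borel_measurable MM" "\<And>x. x \<in> Om \<Longrightarrow> \<bar>f x\<bar> \<le> g x"
  shows "integrable MM f"
proof (rule Bochner_Integration.integrable_bound[OF assms(1,2)])
  show "AE x in MM. norm (f x) \<le> norm (g x)"
    using assms(3) by (intro AE_I2) (force simp: space_restrict_space)
qed

context setting
begin

definition fin :: "(real \<times> real \<Rightarrow> real \<times> real \<times> real) \<Rightarrow> bool" where
  "fin U \<longleftrightarrow> U \<in> borel_measurable MM \<and> integrable MM (\<lambda>x. Qf x (U x))"

definition EN :: "(real \<times> real \<Rightarrow> real \<times> real \<times> real) \<Rightarrow> real" where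
  "EN U = integral\<^sup>L MM (\<lambda>x. Qf x (U x))"

definition BB :: "(real \<times> real \<Rightarrow> real \<times> real \<times> real) \<Rightarrow> (real \<times> real \<Rightarrow> real \<times> real \<times> real) \<Rightarrow> real" where
  "BB U V = integral\<^sup>L MM (\<lambda>x. Bf x (U x) (V x))"

lemma Qf_scale: "Qf x (r *\<^sub>R u) = r^2 * Qf x u"
  by (simp add: Bf_scale1 Bf_scale2 power2_eq_square)

lemma EN_nonneg: "0 \<le> EN U"
  unfolding EN_def by (rule Bochner_Integration.integral_nonneg) (auto intro: Qf_nonneg)

lemma fin_lin:
  assumes U: "fin U" and V: "fin V"
  shows "fin (\<lambda>x. r *\<^sub>R U x + s *\<^sub>R V x)"
proof -
  have mU: "U \<in> borel_measurable MM" and mV: "V \<in> borel_measurable MM"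
    using U V by (auto simp: fin_def)
  have m: "(\<lambda>x. r *\<^sub>R U x + s *\<^sub>R V x) \<in> borel_measurable MM"
    by (rule borel_measurable_add[OF borel_measurable_scaleR[OF borel_measurable_const mU]
                                    borel_measurable_scaleR[OF borel_measurable_const mV]])
  have "integrable MM (\<lambda>x. Qf x (r *\<^sub>R U x + s *\<^sub>R V x))"
  proof (rule int_dom)
    show "integrable MM (\<lambda>x. 2 * (r^2 * Qf x (U x)) + 2 * (s^2 * Qf x (V x)))"
      using U V by (auto simp: fin_def)
    show "(\<lambda>x. Qf x (r *\<^sub>R U x + s *\<^sub>R V x)) \<in> borel_measurable MM" by (rule Bf_meas[OF m m])
    fix x assume x: "x \<in> Om"
    show "\<bar>Qf x (r *\<^sub>R U x + s *\<^sub>R V x)\<bar> \<le> 2 * (r^2 * Qf x (U x)) + 2 * (s^2 * Qf x (V x))"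
      using Qf_add[OF x, of "r *\<^sub>R U x" "s *\<^sub>R V x"] Qf_nonneg[OF x] by (simp add: Qf_scale)
  qed
  then show ?thesis using m by (simp add: fin_def)
qed

lemma fin_diff:
  assumes "fin U" "fin V" shows "fin (\<lambda>x. U x - V x)"
  using fin_lin[OF assms, of 1 "-1"] by simp

lemma fin_B:
  assumes U: "fin U" and V: "fin V"
  shows "integrable MM (\<lambda>x. Bf x (U x) (V x))"
proof (rule int_dom)
  show "integrable MM (\<lambda>x. (Qf x (U x) + Qf x (V x)) / 2)" using U V by (auto simp: fin_def)
  show "(\<lambda>x. Bf x (U x) (V x)) \<in> borel_measurable MM" using U V by (intro Bf_meas) (auto simp: fin_def)
  show "\<bar>Bf x (U x) (V x)\<bar> \<le> (Qf x (U x) + Qf x (V x)) / 2" if "x \<in> Om" for x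
    using Bf_bound1[OF that] .
qed

lemma BB_bound:
  assumes U: "fin U" and V: "fin V" and l: "l > 0"
  shows "\<bar>BB U V\<bar> \<le> (l * EN U + EN V / l) / 2"
proof -
  have "\<bar>BB U V\<bar> \<le> integral\<^sup>L MM (\<lambda>x. \<bar>Bf x (U x) (V x)\<bar>)"
    unfolding BB_def by (rule integral_abs_bound)
  also have "\<dots> \<le> integral\<^sup>L MM (\<lambda>x. (l * Qf x (U x) + Qf x (V x) / l) / 2)"
  proof (rule integral_mono)
    show "integrable MM (\<lambda>x. \<bar>Bf x (U x) (V x)\<bar>)" using fin_B[OF U V] by simp
    show "integrable MM (\<lambda>x. (l * Qf x (U x) + Qf x (V x) / l) / 2)" using U V by (simp add: fin_def)
    show "\<bar>Bf x (U x) (V x)\<bar> \<le> (l * Qf x (U x) + Qf x (V x) / l) / 2" if "x \<in> space MM" for x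
      using Bf_bound[of x l] that l by simp
  qed
  also have "\<dots> = (l * EN U + EN V / l) / 2"
    using U V by (simp add: fin_def EN_def)
  finally show ?thesis .
qed

lemma EN_expand:
  assumes U: "fin U" and V: "fin V"
  shows "EN (\<lambda>x. r *\<^sub>R U x + V x) = r^2 * EN U + 2 * r * BB U V + EN V"
proof -
  have "EN (\<lambda>x. r *\<^sub>R U x + V x) = integral\<^sup>L MM (\<lambda>x. r^2 * Qf x (U x) + 2 * r * Bf x (U x) (V x) + Qf x (V x))"
    unfolding EN_def by (rule Bochner_Integration.integral_cong[OF refl]) (simp add: Qf_expand)
  also have "\<dots> = r^2 * EN U + 2 * r * BB U V + EN V"
    using U V fin_B[OF U V] by (simp add: fin_def EN_def BB_def)
  finally show ?thesis .
qed

lemma fin_norm: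
  assumes U: "fin U"
  shows "integrable MM (\<lambda>x. (norm (U x))^2)" "integral\<^sup>L MM (\<lambda>x. (norm (U x))^2) \<le> Kc * EN U"
proof -
  have m: "U \<in> borel_measurable MM" using U by (simp add: fin_def)
  show i: "integrable MM (\<lambda>x. (norm (U x))^2)"
  proof (rule int_dom)
    show "integrable MM (\<lambda>x. Kc * Qf x (U x))" using U by (simp add: fin_def)
    show "(\<lambda>x. (norm (U x))^2) \<in> borel_measurable MM" using m by measurable
    show "\<bar>(norm (U x))^2\<bar> \<le> Kc * Qf x (U x)" if "x \<in> Om" for x using Qf_coer[OF that] by simp
  qed
  have "integral\<^sup>L MM (\<lambda>x. (norm (U x))^2) \<le> integral\<^sup>L MM (\<lambda>x. Kc * Qf x (U x))"
    using i U by (intro integral_mono) (auto simp: fin_def intro: Qf_coer)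
  then show "integral\<^sup>L MM (\<lambda>x. (norm (U x))^2) \<le> Kc * EN U" by (simp add: EN_def)
qed

end

context setting
begin

lemma Qf_cont: "continuous_on UNIV (\<lambda>v. Qf x v)"
  unfolding Bf_def divide_inverse by (intro continuous_intros)

lemma mu_def': "measure MM (space MM) \<ge> 0" by simp

lemma normb:
  fixes v :: "real \<times> real \<times> real"
  assumes "l > 0"
  shows "norm v \<le> l/2 + (norm v)^2 / (2*l)"
proof -
  have "0 \<le> (norm v - l)^2" by simp
  then have "2 * l * norm v \<le> l^2 + (norm v)^2" by (simp add: power2_eq_square algebra_simps)
  then show ?thesis using assms by (simp add: field_simps power2_eq_square)
qed

lemma fin_L1:
  assumes U: "fin U" and l: "l > 0"
  shows "integrable MM U" "integrable MM (\<lambda>x. norm (U x))"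
    "integral\<^sup>L MM (\<lambda>x. norm (U x)) \<le> l/2 * measure MM (space MM) + Kc * EN U / (2*l)"
proof -
  have m: "U \<in> borel_measurable MM" using U by (simp add: fin_def)
  have iQ: "integrable MM (\<lambda>x. Qf x (U x))" using U by (simp add: fin_def)
  let ?g = "\<lambda>x. l/2 + Kc * Qf x (U x) / (2*l)"
  have ig: "integrable MM ?g" using iQ by simp
  have pt: "norm (U x) \<le> ?g x" if "x \<in> Om" for x
  proof -
    have "norm (U x) \<le> l/2 + (norm (U x))^2 / (2*l)" by (rule normb[OF l])
    also have "\<dots> \<le> ?g x" using Qf_coer[OF that, of "U x"] l by (simp add: divide_right_mono)
    finally show ?thesis .
  qed
  show iU: "integrable MM U"
  proof (rule Bochner_Integration.integrable_bound[OF ig m])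
    have "norm (U x) \<le> norm (?g x)" if "x \<in> Om" for x
    proof -
      have "?g x \<le> norm (?g x)" by (simp only: real_norm_def abs_ge_self)
      then show ?thesis using pt[OF that] by linarith
    qed
    then show "AE x in MM. norm (U x) \<le> norm (?g x)"
      by (intro AE_I2) (simp add: space_restrict_space)
  qed
  show iN: "integrable MM (\<lambda>x. norm (U x))" using iU by simp
  have "integral\<^sup>L MM (\<lambda>x. norm (U x)) \<le> integral\<^sup>L MM ?g"
    using iN ig pt by (intro integral_mono) (auto simp: space_restrict_space)
  also have "\<dots> = l/2 * measure MM (space MM) + Kc * EN U / (2*l)"
    using iQ by (simp add: EN_def)
  finally show "integral\<^sup>L MM (\<lambda>x. norm (U x)) \<le> l/2 * measure MM (space MM) + Kc * EN U / (2*l)" .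
qed

lemma fatou_step:
  assumes fin: "\<And>n. fin (\<Psi> n)" and U0m: "U0 \<in> borel_measurable MM"
    and conv: "AE x in MM. (\<lambda>i. \<Psi> (r i) x) \<longlonglongrightarrow> U0 x"
    and bnd: "\<And>i. i \<ge> N \<Longrightarrow> EN (\<lambda>x. \<Psi> n x - \<Psi> (r i) x) \<le> e"
  shows "integrable MM (\<lambda>x. Qf x (\<Psi> n x - U0 x))" "EN (\<lambda>x. \<Psi> n x - U0 x) \<le> e"
proof -
  have mP: "\<And>n. \<Psi> n \<in> borel_measurable MM" using fin by (simp add: fin_def)
  have mD: "(\<lambda>x. \<Psi> n x - U0 x) \<in> borel_measurable MM" using mP U0m by (rule borel_measurable_diff)
  have mQ: "(\<lambda>x. Qf x (\<Psi> n x - U0 x)) \<in> borel_measurable MM" by (rule Bf_meas[OF mD mD])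
  have mQi: "(\<lambda>x. ennreal (Qf x (\<Psi> n x - \<Psi> (r i) x))) \<in> borel_measurable MM" for i
  proof -
    have d: "(\<lambda>x. \<Psi> n x - \<Psi> (r i) x) \<in> borel_measurable MM" by (rule borel_measurable_diff[OF mP mP])
    have "(\<lambda>x. Qf x (\<Psi> n x - \<Psi> (r i) x)) \<in> borel_measurable MM" by (rule Bf_meas[OF d d])
    then show ?thesis by (rule measurable_compose) simp
  qed
  have ae: "AE x in MM. ennreal (Qf x (\<Psi> n x - U0 x)) = liminf (\<lambda>i. ennreal (Qf x (\<Psi> n x - \<Psi> (r i) x)))"
    using conv
  proof (rule AE_mp, intro AE_I2 impI)
    fix x assume c: "(\<lambda>i. \<Psi> (r i) x) \<longlonglongrightarrow> U0 x"
    have "(\<lambda>i. \<Psi> n x - \<Psi> (r i) x) \<longlonglongrightarrow> \<Psi> n x - U0 x" using c by (intro tendsto_intros)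
    moreover have "isCont (\<lambda>v. Qf x v) (\<Psi> n x - U0 x)"
      by (rule continuous_on_eq_continuous_at[THEN iffD1, OF open_UNIV Qf_cont, rule_format, OF UNIV_I])
    ultimately have "(\<lambda>i. Qf x (\<Psi> n x - \<Psi> (r i) x)) \<longlonglongrightarrow> Qf x (\<Psi> n x - U0 x)"
      by (rule isCont_tendsto_compose[rotated])
    then have "(\<lambda>i. ennreal (Qf x (\<Psi> n x - \<Psi> (r i) x))) \<longlonglongrightarrow> ennreal (Qf x (\<Psi> n x - U0 x))"
      by (rule tendsto_ennrealI)
    moreover have nt: "\<not> trivial_limit (sequentially :: nat filter)" by simp
    ultimately have "liminf (\<lambda>i. ennreal (Qf x (\<Psi> n x - \<Psi> (r i) x))) = ennreal (Qf x (\<Psi> n x - U0 x))"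
      using lim_imp_Liminf by blast
    then show "ennreal (Qf x (\<Psi> n x - U0 x)) = liminf (\<lambda>i. ennreal (Qf x (\<Psi> n x - \<Psi> (r i) x)))"
      by simp
  qed
  have "(\<integral>\<^sup>+x. ennreal (Qf x (\<Psi> n x - U0 x)) \<partial>MM) = (\<integral>\<^sup>+x. liminf (\<lambda>i. ennreal (Qf x (\<Psi> n x - \<Psi> (r i) x))) \<partial>MM)"
    using ae by (rule nn_integral_cong_AE)
  also have "\<dots> \<le> liminf (\<lambda>i. \<integral>\<^sup>+x. ennreal (Qf x (\<Psi> n x - \<Psi> (r i) x)) \<partial>MM)"
    using mQi by (rule nn_integral_liminf)
  also have "\<dots> = liminf (\<lambda>i. ennreal (EN (\<lambda>x. \<Psi> n x - \<Psi> (r i) x)))"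
  proof -
    have "(\<integral>\<^sup>+x. ennreal (Qf x (\<Psi> n x - \<Psi> (r i) x)) \<partial>MM) = ennreal (EN (\<lambda>x. \<Psi> n x - \<Psi> (r i) x))" for i
    proof -
      have "integrable MM (\<lambda>x. Qf x (\<Psi> n x - \<Psi> (r i) x))"
        using fin_diff[OF fin fin, of n "r i"] by (simp add: fin_def)
      moreover have "AE x in MM. 0 \<le> Qf x (\<Psi> n x - \<Psi> (r i) x)"
        by (intro AE_I2) (simp add: space_restrict_space Qf_nonneg)
      ultimately show ?thesis unfolding EN_def by (rule nn_integral_eq_integral)
    qed
    then show ?thesis by simp
  qed
  also have "\<dots> \<le> limsup (\<lambda>i. ennreal (EN (\<lambda>x. \<Psi> n x - \<Psi> (r i) x)))"
    by (rule Liminf_le_Limsup) simp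
  also have "\<dots> \<le> ennreal e"
  proof (rule Limsup_bounded)
    show "\<forall>\<^sub>F i in sequentially. ennreal (EN (\<lambda>x. \<Psi> n x - \<Psi> (r i) x)) \<le> ennreal e"
      unfolding eventually_sequentially using bnd ennreal_leI by blast
  qed
  finally have nn: "(\<integral>\<^sup>+x. ennreal (Qf x (\<Psi> n x - U0 x)) \<partial>MM) \<le> ennreal e" .
  have nonneg: "AE x in MM. 0 \<le> Qf x (\<Psi> n x - U0 x)"
    by (intro AE_I2) (auto intro: Qf_nonneg simp: space_restrict_space)
  show "integrable MM (\<lambda>x. Qf x (\<Psi> n x - U0 x))"
    using mQ nonneg nn by (intro integrableI_nonneg) (auto simp: top_unique intro: le_less_trans)
  have "EN (\<lambda>x. \<Psi> n x - U0 x) = enn2real (\<integral>\<^sup>+x. ennreal (Qf x (\<Psi> n x - U0 x)) \<partial>MM)"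
    unfolding EN_def using mQ nonneg by (rule integral_eq_nn_integral)
  also have "\<dots> \<le> e"
  proof -
    have "0 \<le> e" using bnd[of N] EN_nonneg[of "\<lambda>x. \<Psi> n x - \<Psi> (r N) x"] by simp
    then show ?thesis using nn by (simp add: enn2real_leI)
  qed
  finally show "EN (\<lambda>x. \<Psi> n x - U0 x) \<le> e" .
qed

end

context setting
begin

lemma comp:
  assumes fin: "\<And>n. fin (\<Psi> n)"
    and cau: "\<And>e. e > 0 \<Longrightarrow> \<exists>N. \<forall>n\<ge>N. \<forall>k\<ge>N. EN (\<lambda>x. \<Psi> n x - \<Psi> k x) < e"
  obtains U where "fin U" "\<And>n. fin (\<lambda>x. \<Psi> n x - U x)" "(\<lambda>n. EN (\<lambda>x. \<Psi> n x - U x)) \<longlonglongrightarrow> 0"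
proof -
  have mP: "\<And>n. \<Psi> n \<in> borel_measurable MM" using fin by (simp add: fin_def)
  define mu where "mu = measure MM (space MM)"
  have mu0: "mu \<ge> 0" by (simp add: mu_def)
  have iP: "integrable MM (\<Psi> n)" for n using fin_L1(1)[OF fin, of 1] by simp
  have L1: "\<exists>N. \<forall>i\<ge>N. \<forall>j\<ge>N. integral\<^sup>L MM (\<lambda>x. norm (\<Psi> i x - \<Psi> j x)) < e" if e: "e > 0" for e
  proof -
    define l where "l = e / (mu + 1)"
    have l: "l > 0" using e mu0 by (simp add: l_def)
    have "e * l / Kc > 0" using e l Kc_pos by simp
    then obtain N where N: "\<And>n k. n \<ge> N \<Longrightarrow> k \<ge> N \<Longrightarrow> EN (\<lambda>x. \<Psi> n x - \<Psi> k x) < e * l / Kc"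
      using cau by blast
    have lmu: "l/2 * mu < e/2"
    proof -
      have "l * mu = e * (mu / (mu + 1))" by (simp add: l_def)
      also have "\<dots> < e * 1" using e mu0 by (intro mult_strict_left_mono) auto
      finally show ?thesis by simp
    qed
    show ?thesis
    proof (intro exI allI impI)
      fix i j assume ij: "N \<le> i" "N \<le> j"
      have f: "fin (\<lambda>x. \<Psi> i x - \<Psi> j x)" by (rule fin_diff[OF fin fin])
      have "integral\<^sup>L MM (\<lambda>x. norm (\<Psi> i x - \<Psi> j x)) \<le> l/2 * mu + Kc * EN (\<lambda>x. \<Psi> i x - \<Psi> j x) / (2*l)"
        using fin_L1(3)[OF f l] by (simp add: mu_def)
      also have "Kc * EN (\<lambda>x. \<Psi> i x - \<Psi> j x) / (2*l) < Kc * (e * l / Kc) / (2*l)"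
        using N[OF ij] Kc_pos l by (intro divide_strict_right_mono mult_strict_left_mono) auto
      also have "Kc * (e * l / Kc) / (2*l) = e/2" using Kc_pos l by simp
      finally show "integral\<^sup>L MM (\<lambda>x. norm (\<Psi> i x - \<Psi> j x)) < e" using lmu by linarith
    qed
  qed
  obtain r where r: "strict_mono r" and aeC: "AE x in MM. Cauchy (\<lambda>i. \<Psi> (r i) x)"
    using cauchy_L1_AE_cauchy_subseq[OF iP L1] by blast
  define U0 where "U0 x = lim (\<lambda>i. \<Psi> (r i) x)" for x
  have U0m: "U0 \<in> borel_measurable MM"
    unfolding U0_def using mP by (intro borel_measurable_lim_metric)
  have conv: "AE x in MM. (\<lambda>i. \<Psi> (r i) x) \<longlonglongrightarrow> U0 x"
    using aeC by eventually_elim (simp add: U0_def Cauchy_convergent_iff convergent_LIMSEQ_iff)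
  have key: "integrable MM (\<lambda>x. Qf x (\<Psi> n x - U0 x)) \<and> EN (\<lambda>x. \<Psi> n x - U0 x) \<le> e"
    if "e > 0" "N \<le> n" "\<And>n k. n \<ge> N \<Longrightarrow> k \<ge> N \<Longrightarrow> EN (\<lambda>x. \<Psi> n x - \<Psi> k x) < e" for e N n
  proof -
    have "EN (\<lambda>x. \<Psi> n x - \<Psi> (r i) x) \<le> e" if "i \<ge> N" for i
    proof -
      have "r i \<ge> i" using r by (rule strict_mono_imp_increasing)
      then show ?thesis using that \<open>N \<le> n\<close> \<open>\<And>n k. n \<ge> N \<Longrightarrow> k \<ge> N \<Longrightarrow> EN (\<lambda>x. \<Psi> n x - \<Psi> k x) < e\<close>[of n "r i"]
        by simp
    qed
    then show ?thesis using fatou_step[where \<Psi>=\<Psi>, OF fin U0m conv] by blast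
  qed
  obtain N1 where N1: "\<And>n k. n \<ge> N1 \<Longrightarrow> k \<ge> N1 \<Longrightarrow> EN (\<lambda>x. \<Psi> n x - \<Psi> k x) < 1"
    using cau[of 1] by auto
  have fN1: "fin (\<lambda>x. \<Psi> N1 x - U0 x)"
    using key[OF _ order_refl N1] U0m mP unfolding fin_def by (auto intro: borel_measurable_diff)
  have finU: "fin U0"
    using fin_diff[OF fin fN1, of N1] by simp
  have finD: "fin (\<lambda>x. \<Psi> n x - U0 x)" for n
    using fin_diff[OF fin finU, of n] .
  have lim: "(\<lambda>n. EN (\<lambda>x. \<Psi> n x - U0 x)) \<longlonglongrightarrow> 0"
  proof (rule LIMSEQ_I)
    fix e :: real assume e: "e > 0"
    then obtain N where N: "\<And>n k. n \<ge> N \<Longrightarrow> k \<ge> N \<Longrightarrow> EN (\<lambda>x. \<Psi> n x - \<Psi> k x) < e/2"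
      using cau[of "e/2"] by auto
    show "\<exists>no. \<forall>n\<ge>no. norm (EN (\<lambda>x. \<Psi> n x - U0 x) - 0) < e"
    proof (intro exI allI impI)
      fix n assume "N \<le> n"
      then have "EN (\<lambda>x. \<Psi> n x - U0 x) \<le> e/2" using key[of "e/2" N n] e N by auto
      then show "norm (EN (\<lambda>x. \<Psi> n x - U0 x) - 0) < e" using EN_nonneg[of "\<lambda>x. \<Psi> n x - U0 x"] e by simp
    qed
  qed
  show ?thesis using that[OF finU finD lim] .
qed

end

definition L2v :: "(real \<times> real \<Rightarrow> real \<times> real \<times> real) \<Rightarrow> bool" where
  "L2v U \<longleftrightarrow> U \<in> borel_measurable MM \<and> integrable MM (\<lambda>x. (norm (U x))^2)"

lemma norm_diff_sq:
  fixes u v :: "'a::real_normed_vector"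
  shows "(norm (u - v))^2 \<le> 2 * (norm u)^2 + 2 * (norm v)^2"
proof -
  have "norm (u - v) \<le> norm u + norm v" by (rule norm_triangle_ineq4)
  then have "(norm (u - v))^2 \<le> (norm u + norm v)^2" by (intro power_mono) auto
  also have "\<dots> \<le> 2 * (norm u)^2 + 2 * (norm v)^2"
    using zero_le_power2[of "norm u - norm v"] by (simp add: power2_eq_square algebra_simps)
  finally show ?thesis .
qed

lemma L2v_diff:
  assumes U: "L2v U" and V: "L2v V"
  shows "L2v (\<lambda>x. U x - V x)"
    "integral\<^sup>L MM (\<lambda>x. (norm (U x - V x))^2) \<le> 2 * integral\<^sup>L MM (\<lambda>x. (norm (U x))^2) + 2 * integral\<^sup>L MM (\<lambda>x. (norm (V x))^2)"
proof -
  have m: "(\<lambda>x. U x - V x) \<in> borel_measurable MM"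
    using U V unfolding L2v_def by (intro borel_measurable_diff) auto
  have i: "integrable MM (\<lambda>x. (norm (U x - V x))^2)"
  proof (rule int_dom)
    show "integrable MM (\<lambda>x. 2 * (norm (U x))^2 + 2 * (norm (V x))^2)" using U V by (simp add: L2v_def)
    show "(\<lambda>x. (norm (U x - V x))^2) \<in> borel_measurable MM" using m by measurable
    show "\<bar>(norm (U x - V x))^2\<bar> \<le> 2 * (norm (U x))^2 + 2 * (norm (V x))^2" for x
      using norm_diff_sq[of "U x" "V x"] by simp
  qed
  show "L2v (\<lambda>x. U x - V x)" using m i by (simp add: L2v_def)
  have "integral\<^sup>L MM (\<lambda>x. (norm (U x - V x))^2) \<le> integral\<^sup>L MM (\<lambda>x. 2 * (norm (U x))^2 + 2 * (norm (V x))^2)"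
    using i U V norm_diff_sq by (intro integral_mono) (auto simp: L2v_def)
  then show "integral\<^sup>L MM (\<lambda>x. (norm (U x - V x))^2) \<le> 2 * integral\<^sup>L MM (\<lambda>x. (norm (U x))^2) + 2 * integral\<^sup>L MM (\<lambda>x. (norm (V x))^2)"
    using U V by (simp add: L2v_def)
qed

lemma L2v_tri:
  assumes U: "L2v U" and V: "L2v V" and W: "L2v W"
  shows "integral\<^sup>L MM (\<lambda>x. (norm (U x - W x))^2) \<le> 2 * integral\<^sup>L MM (\<lambda>x. (norm (U x - V x))^2) + 2 * integral\<^sup>L MM (\<lambda>x. (norm (W x - V x))^2)"
  using L2v_diff(2)[OF L2v_diff(1)[OF U V] L2v_diff(1)[OF W V]] by simp

lemma test_L2v: "test f \<Longrightarrow> L2v (tU f)"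
  unfolding L2v_def
proof
  assume f: "test f"
  have "continuous_on UNIV (tU f)" by (rule tU_cont[OF f])
  then have "tU f \<in> borel_measurable borel" by (rule borel_measurable_continuous_onI)
  then have "tU f \<in> borel_measurable lborel" by simp
  then show "tU f \<in> borel_measurable MM" by (rule measurable_restrict_space1)
  show "integrable MM (\<lambda>x. (norm (tU f x))^2)"
    using tU_cont[OF f] by (intro test_cont_integrable continuous_intros)
qed

context setting
begin

lemma fin_L2v: "fin U \<Longrightarrow> L2v U"
  using fin_norm(1) unfolding L2v_def fin_def by blast

definition Kh :: real where "Kh = (a + 3) * (1 + 4 * c)"

lemma test_fin:
  assumes f: "test f"
  shows "fin (tU f)" "EN (tU f) \<le> Kh * integral\<^sup>L MM (\<lambda>x. (norm (tU f x))^2)"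
proof -
  have m: "tU f \<in> borel_measurable MM" using test_L2v[OF f] by (simp add: L2v_def)
  have cf: "continuous_on UNIV f" "continuous_on UNIV (dR f)" "continuous_on UNIV (dT f)"
    using test_cont[OF f] by auto
  have i1: "integrable MM (\<lambda>x. (dR f x)^2)" "integrable MM (\<lambda>x. (dT f x)^2)" "integrable MM (\<lambda>x. (f x)^2)"
    using cf by (auto intro!: test_cont_integrable continuous_intros)
  define C where "C x = (f x)^2 / (rho (fst x))^2" for x
  note h = hardy_test[OF f, folded C_def]
  let ?g = "\<lambda>x. (a + 3) * ((dR f x)^2 + (dT f x)^2 + c * C x)"
  have ig: "integrable MM ?g"
    by (intro integrable_mult_right Bochner_Integration.integrable_add i1 h(1))
  have pt: "Qf x (tU f x) \<le> ?g x" if "x \<in> Om" for x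
    using Qf_upper[OF that, of "tU f x"] by (simp add: tU_def C_def)
  have iQ: "integrable MM (\<lambda>x. Qf x (tU f x))"
  proof (rule int_dom[OF ig])
    show "(\<lambda>x. Qf x (tU f x)) \<in> borel_measurable MM" by (rule Bf_meas[OF m m])
    show "\<bar>Qf x (tU f x)\<bar> \<le> ?g x" if "x \<in> Om" for x using pt[OF that] Qf_nonneg[OF that] by simp
  qed
  show "fin (tU f)" using m iQ by (simp add: fin_def)
  have "EN (tU f) \<le> integral\<^sup>L MM ?g"
    unfolding EN_def using iQ ig pt by (intro integral_mono) (auto simp: space_restrict_space)
  also have "\<dots> = (a + 3) * (integral\<^sup>L MM (\<lambda>x. (dR f x)^2) + integral\<^sup>L MM (\<lambda>x. (dT f x)^2)
       + c * integral\<^sup>L MM C)"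
    using i1 h(1) by simp
  also have "\<dots> \<le> (a + 3) * (integral\<^sup>L MM (\<lambda>x. (dR f x)^2) + integral\<^sup>L MM (\<lambda>x. (dT f x)^2)
       + c * (4 * integral\<^sup>L MM (\<lambda>x. (dR f x)^2)))"
    using h(2) c0 a4 by (intro mult_left_mono add_left_mono) auto
  also have "\<dots> \<le> Kh * (integral\<^sup>L MM (\<lambda>x. (f x)^2) + integral\<^sup>L MM (\<lambda>x. (dR f x)^2) + integral\<^sup>L MM (\<lambda>x. (dT f x)^2))"
  proof -
    have nn: "0 \<le> integral\<^sup>L MM (\<lambda>x. (f x)^2)" "0 \<le> integral\<^sup>L MM (\<lambda>x. (dR f x)^2)" "0 \<le> integral\<^sup>L MM (\<lambda>x. (dT f x)^2)"
      by (auto intro: Bochner_Integration.integral_nonneg)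
    show ?thesis unfolding Kh_def using nn a4 c0
      by (simp add: algebra_simps)
  qed
  also have "\<dots> = Kh * integral\<^sup>L MM (\<lambda>x. (norm (tU f x))^2)"
    using i1 by (simp add: tU_def norm3)
  finally show "EN (tU f) \<le> Kh * integral\<^sup>L MM (\<lambda>x. (norm (tU f x))^2)" .
qed

end

definition trip :: "(real \<times> real \<Rightarrow> real) \<Rightarrow> (real \<times> real \<Rightarrow> real) \<Rightarrow> (real \<times> real \<Rightarrow> real) \<Rightarrow> real \<times> real \<Rightarrow> real \<times> real \<times> real" where
  "trip V VR VT = (\<lambda>x. (V x, VR x, VT x))"

lemma L2_MM: "L2 f \<longleftrightarrow> f \<in> borel_measurable MM \<and> integrable MM (\<lambda>x. (f x)^2)"
  unfolding L2_def by (simp add: measurable_MM_iff integrable_MM_iff)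

lemma H1_L2v:
  assumes "H1 V VR VT" shows "L2v (trip V VR VT)"
proof -
  have m: "V \<in> borel_measurable MM" "VR \<in> borel_measurable MM" "VT \<in> borel_measurable MM"
   and i: "integrable MM (\<lambda>x. (V x)^2)" "integrable MM (\<lambda>x. (VR x)^2)" "integrable MM (\<lambda>x. (VT x)^2)"
    using assms unfolding H1_def L2_MM by auto
  have "trip V VR VT \<in> borel_measurable MM"
    unfolding trip_def using m by (intro borel_measurable_Pair) auto
  moreover have "integrable MM (\<lambda>x. (norm (trip V VR VT x))^2)"
    using i by (simp add: trip_def norm3)
  ultimately show ?thesis by (simp add: L2v_def)
qed

lemma H10_approx:
  assumes "H10 V VR VT"
  obtains \<phi> where "\<And>n. test (\<phi> n)"
    "(\<lambda>n. integral\<^sup>L MM (\<lambda>x. (norm (tU (\<phi> n) x - trip V VR VT x))^2)) \<longlonglongrightarrow> 0"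
proof -
  obtain \<phi> where t: "\<And>n. test (\<phi> n)" and c: "(\<lambda>n. LINT x:Om|lborel. (\<phi> n x - V x)^2 + (dR (\<phi> n) x - VR x)^2
                                + (dT (\<phi> n) x - VT x)^2) \<longlonglongrightarrow> 0"
    using assms unfolding H10_def by blast
  have "(\<lambda>n. integral\<^sup>L MM (\<lambda>x. (norm (tU (\<phi> n) x - trip V VR VT x))^2)) =
        (\<lambda>n. LINT x:Om|lborel. (\<phi> n x - V x)^2 + (dR (\<phi> n) x - VR x)^2 + (dT (\<phi> n) x - VT x)^2)"
    unfolding integral_MM by (simp add: tU_def trip_def norm3)
  then have "(\<lambda>n. integral\<^sup>L MM (\<lambda>x. (norm (tU (\<phi> n) x - trip V VR VT x))^2)) \<longlonglongrightarrow> 0"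
    using c by simp
  then show ?thesis by (rule that[OF t])
qed

context setting
begin

lemma closure:
  assumes H: "H10 V VR VT"
  shows "fin (trip V VR VT)"
    "\<exists>\<phi>. (\<forall>n. test (\<phi> n)) \<and> (\<lambda>n. EN (\<lambda>x. tU (\<phi> n) x - trip V VR VT x)) \<longlonglongrightarrow> 0"
proof -
  let ?V = "trip V VR VT"
  have LV: "L2v ?V" using H unfolding H10_def by (auto intro: H1_L2v)
  obtain \<phi> where t: "\<And>n. test (\<phi> n)"
    and s: "(\<lambda>n. integral\<^sup>L MM (\<lambda>x. (norm (tU (\<phi> n) x - ?V x))^2)) \<longlonglongrightarrow> 0"
    using H10_approx[OF H] by blast
  define s where "s n = integral\<^sup>L MM (\<lambda>x. (norm (tU (\<phi> n) x - ?V x))^2)" for n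
  have s0: "s \<longlonglongrightarrow> 0" using s by (simp add: s_def[abs_def])
  have tUd: "tU (\<lambda>x. 1 * \<phi> n x + (-1) * \<phi> k x) = (\<lambda>x. tU (\<phi> n) x - tU (\<phi> k) x)" for n k
    using tU_lin[OF t t, of 1 n "-1" k] by simp
  have tD: "test (\<lambda>x. 1 * \<phi> n x + (-1) * \<phi> k x)" for n k by (rule test_lin[OF t t])
  have Kh0: "Kh > 0" unfolding Kh_def using a4 c0 by (simp add: add_pos_nonneg)
  have cau: "\<exists>N. \<forall>n\<ge>N. \<forall>k\<ge>N. EN (\<lambda>x. tU (\<phi> n) x - tU (\<phi> k) x) < e" if e: "e > 0" for e
  proof -
    have "e / (4 * Kh + 1) > 0" using e Kh0 by simp
    then obtain N where N0: "\<forall>n\<ge>N. norm (s n - 0) < e / (4 * Kh + 1)"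
      using LIMSEQ_D[OF s0] by blast
    have N: "s n < e / (4 * Kh + 1)" if "n \<ge> N" for n
      using N0[rule_format, OF that] by (simp add: abs_less_iff)
    show ?thesis
    proof (intro exI allI impI)
      fix n k assume nk: "N \<le> n" "N \<le> k"
      have "EN (\<lambda>x. tU (\<phi> n) x - tU (\<phi> k) x) \<le> Kh * integral\<^sup>L MM (\<lambda>x. (norm (tU (\<phi> n) x - tU (\<phi> k) x))^2)"
        using test_fin(2)[OF tD, of n k] unfolding tUd .
      also have "\<dots> \<le> Kh * (2 * s n + 2 * s k)"
        unfolding s_def using L2v_tri[OF test_L2v[OF t] LV test_L2v[OF t], of n k] Kh0
        by (intro mult_left_mono) auto
      also have "\<dots> < Kh * (4 * (e / (4 * Kh + 1)))"
        using N[OF nk(1)] N[OF nk(2)] Kh0 by (intro mult_strict_left_mono) auto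
      also have "\<dots> \<le> e" using Kh0 e by (simp add: field_simps)
      finally show "EN (\<lambda>x. tU (\<phi> n) x - tU (\<phi> k) x) < e" .
    qed
  qed
  obtain U where fU: "fin U" and fD: "\<And>n. fin (\<lambda>x. tU (\<phi> n) x - U x)"
    and lim: "(\<lambda>n. EN (\<lambda>x. tU (\<phi> n) x - U x)) \<longlonglongrightarrow> 0"
    using comp[where \<Psi>="\<lambda>n. tU (\<phi> n)", OF test_fin(1)[OF t] cau] by blast
  have LU: "L2v U" by (rule fin_L2v[OF fU])
  define q where "q n = integral\<^sup>L MM (\<lambda>x. (norm (tU (\<phi> n) x - U x))^2)" for n
  have q0: "q \<longlonglongrightarrow> 0"
  proof (rule tendsto_sandwich[of "\<lambda>n. 0" _ _ "\<lambda>n. Kc * EN (\<lambda>x. tU (\<phi> n) x - U x)"])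
    show "\<forall>\<^sub>F n in sequentially. 0 \<le> q n" unfolding q_def by (auto intro: Bochner_Integration.integral_nonneg)
    show "\<forall>\<^sub>F n in sequentially. q n \<le> Kc * EN (\<lambda>x. tU (\<phi> n) x - U x)"
      unfolding q_def using fin_norm(2)[OF fD] by auto
    show "(\<lambda>n. Kc * EN (\<lambda>x. tU (\<phi> n) x - U x)) \<longlonglongrightarrow> 0" using tendsto_mult_right_zero[OF lim] by simp
  qed simp
  let ?A = "integral\<^sup>L MM (\<lambda>x. (norm (U x - ?V x))^2)"
  have "?A \<le> 0"
  proof (rule LIMSEQ_le_const)
    show "(\<lambda>n. 2 * q n + 2 * s n) \<longlonglongrightarrow> 0" using q0 s0 by (auto intro!: tendsto_eq_intros)
    have "?A \<le> 2 * q n + 2 * s n" for n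
    proof -
      have "?A \<le> 2 * integral\<^sup>L MM (\<lambda>x. (norm (U x - tU (\<phi> n) x))^2) + 2 * integral\<^sup>L MM (\<lambda>x. (norm (?V x - tU (\<phi> n) x))^2)"
        by (rule L2v_tri[OF LU test_L2v[OF t] LV])
      also have "\<dots> = 2 * q n + 2 * s n" unfolding q_def s_def by (simp add: norm_minus_commute)
      finally show ?thesis .
    qed
    then show "\<exists>N. \<forall>n\<ge>N. ?A \<le> 2 * q n + 2 * s n" by blast
  qed
  moreover have "0 \<le> ?A" by (auto intro: Bochner_Integration.integral_nonneg)
  ultimately have A0: "?A = 0" by simp
  have iA: "integrable MM (\<lambda>x. (norm (U x - ?V x))^2)" using L2v_diff(1)[OF LU LV] by (simp add: L2v_def)
  have "AE x in MM. (norm (U x - ?V x))^2 = 0"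
    using A0 integral_nonneg_eq_0_iff_AE[OF iA] by auto
  then have ae: "AE x in MM. U x = ?V x" by eventually_elim simp
  have mV: "?V \<in> borel_measurable MM" using LV by (simp add: L2v_def)
  have mU: "U \<in> borel_measurable MM" using fU by (simp add: fin_def)
  have mt: "tU (\<phi> n) \<in> borel_measurable MM" for n using test_L2v[OF t] by (simp add: L2v_def)
  have "integrable MM (\<lambda>x. Qf x (?V x))"
  proof (rule integrable_cong_AE_imp)
    show "integrable MM (\<lambda>x. Qf x (U x))" using fU by (simp add: fin_def)
    show "(\<lambda>x. Qf x (?V x)) \<in> borel_measurable MM" by (rule Bf_meas[OF mV mV])
    show "AE x in MM. Qf x (U x) = Qf x (?V x)" using ae by eventually_elim simp
  qed
  then show "fin ?V" using mV by (simp add: fin_def)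
  have "EN (\<lambda>x. tU (\<phi> n) x - ?V x) = EN (\<lambda>x. tU (\<phi> n) x - U x)" for n
    unfolding EN_def
  proof (rule integral_cong_AE)
    have d1: "(\<lambda>x. tU (\<phi> n) x - ?V x) \<in> borel_measurable MM" using mt mV by (rule borel_measurable_diff)
    have d2: "(\<lambda>x. tU (\<phi> n) x - U x) \<in> borel_measurable MM" using mt mU by (rule borel_measurable_diff)
    show "(\<lambda>x. Qf x (tU (\<phi> n) x - ?V x)) \<in> borel_measurable MM" by (rule Bf_meas[OF d1 d1])
    show "(\<lambda>x. Qf x (tU (\<phi> n) x - U x)) \<in> borel_measurable MM" by (rule Bf_meas[OF d2 d2])
    show "AE x in MM. Qf x (tU (\<phi> n) x - ?V x) = Qf x (tU (\<phi> n) x - U x)" using ae by eventually_elim simp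
  qed
  then have "(\<lambda>n. EN (\<lambda>x. tU (\<phi> n) x - ?V x)) \<longlonglongrightarrow> 0" using lim by simp
  then show "\<exists>\<phi>. (\<forall>n. test (\<phi> n)) \<and> (\<lambda>n. EN (\<lambda>x. tU (\<phi> n) x - ?V x)) \<longlonglongrightarrow> 0"
    using t by blast
qed

end

lemma tendsto_by_bound:
  fixes x B :: "nat \<Rightarrow> real"
  assumes A: "A \<ge> 0" and B: "B \<longlonglongrightarrow> 0" and bnd: "\<And>l n. l > 0 \<Longrightarrow> \<bar>x n\<bar> \<le> (l * A + B n / l) / 2"
  shows "x \<longlonglongrightarrow> 0"
proof (rule LIMSEQ_I)
  fix e :: real assume e: "e > 0"
  define l where "l = e / (A + 1)"
  have l: "l > 0" using e A by (simp add: l_def)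
  have lA: "l * A < e"
  proof -
    have "l * A = e * (A / (A + 1))" by (simp add: l_def)
    also have "\<dots> < e * 1" using e A by (intro mult_strict_left_mono) auto
    finally show ?thesis by simp
  qed
  obtain N where N: "\<forall>n\<ge>N. norm (B n - 0) < e * l" using LIMSEQ_D[OF B] e l by (meson mult_pos_pos)
  show "\<exists>no. \<forall>n\<ge>no. norm (x n - 0) < e"
  proof (intro exI allI impI)
    fix n assume "N \<le> n"
    then have "B n < e * l" using N by (auto simp: abs_less_iff)
    then have "B n / l < e" using l by (simp add: divide_less_eq)
    then show "norm (x n - 0) < e" using bnd[OF l, of n] lA by simp
  qed
qed

lemma quad_zero:
  fixes g E :: real
  assumes E: "E \<ge> 0" and q: "\<And>t. 0 \<le> t * g + t^2 * E / 2"
  shows "g = 0"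
proof -
  define t where "t = - g / (E + 1)"
  have "0 \<le> t * g + t^2 * E / 2" by (rule q)
  then have "0 \<le> (t * g + t^2 * E / 2) * (2 * (E + 1)^2)" using E by simp
  also have "(t * g + t^2 * E / 2) * (2 * (E + 1)^2) = - (g^2 * (E + 2))"
  proof -
    have E1: "E + 1 \<noteq> 0" using E by simp
    have 1: "t * g * (2 * (E + 1)^2) = - (2 * g^2 * (E + 1))"
      unfolding t_def using E1 by (simp add: power2_eq_square)
    have 2: "t^2 * E / 2 * (2 * (E + 1)^2) = g^2 * E"
      unfolding t_def using E1 by (simp add: power2_eq_square)
    have "(t * g + t^2 * E / 2) * (2 * (E + 1)^2) = t * g * (2 * (E + 1)^2) + t^2 * E / 2 * (2 * (E + 1)^2)"
      by (rule distrib_right)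
    also have "\<dots> = - (2 * g^2 * (E + 1)) + g^2 * E" unfolding 1 2 ..
    also have "\<dots> = - (g^2 * (E + 2))" by (simp add: algebra_simps)
    finally show ?thesis .
  qed
  finally have "g^2 * (E + 2) \<le> 0" by simp
  then have "g^2 \<le> 0" using E by (simp add: mult_le_0_iff)
  then show ?thesis by simp
qed

locale prob = setting +
  fixes G :: "real \<times> real \<Rightarrow> real"
  assumes Gm: "G \<in> borel_measurable MM" and Gi: "integrable MM (\<lambda>x. (G x)^2)"
begin

definition ell :: "(real \<times> real \<Rightarrow> real \<times> real \<times> real) \<Rightarrow> real" where
  "ell U = integral\<^sup>L MM (\<lambda>x. G x * fst (U x))"

definition gg :: real where "gg = integral\<^sup>L MM (\<lambda>x. (G x)^2)"

lemma gg_nonneg: "gg \<ge> 0" unfolding gg_def by (auto intro: Bochner_Integration.integral_nonneg)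

lemma amgm:
  fixes p q l :: real
  assumes "l > 0"
  shows "\<bar>p * q\<bar> \<le> (l * p^2 + q^2 / l) / 2"
proof -
  have "0 \<le> (l * \<bar>p\<bar> - \<bar>q\<bar>)^2" by simp
  then have "2 * l * \<bar>p * q\<bar> \<le> l^2 * p^2 + q^2" by (simp add: power2_eq_square algebra_simps abs_mult)
  then show ?thesis using assms by (simp add: field_simps power2_eq_square)
qed

lemma ell_int:
  assumes U: "L2v U"
  shows "integrable MM (\<lambda>x. G x * fst (U x))"
    "\<And>l. l > 0 \<Longrightarrow> \<bar>ell U\<bar> \<le> (l * gg + integral\<^sup>L MM (\<lambda>x. (norm (U x))^2) / l) / 2"
proof -
  have mU: "U \<in> borel_measurable MM" and iU: "integrable MM (\<lambda>x. (norm (U x))^2)" using U by (auto simp: L2v_def)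
  have m: "(\<lambda>x. G x * fst (U x)) \<in> borel_measurable MM"
    using Gm meas_c1[OF mU] by (rule borel_measurable_times)
  have pt: "\<bar>G x * fst (U x)\<bar> \<le> (l * (G x)^2 + (norm (U x))^2 / l) / 2" if "l > 0" for x l
  proof -
    have "(fst (U x))^2 \<le> (norm (U x))^2" by (simp add: norm3)
    then have "(fst (U x))^2 / l \<le> (norm (U x))^2 / l" using that by (simp add: divide_right_mono)
    then show ?thesis using amgm[OF that, of "G x" "fst (U x)"] by simp
  qed
  show i: "integrable MM (\<lambda>x. G x * fst (U x))"
    using Gi iU pt[of 1] by (intro int_dom[OF _ m, of "\<lambda>x. (1 * (G x)^2 + (norm (U x))^2 / 1) / 2"]) auto
  fix l :: real assume l: "l > 0"
  have "\<bar>ell U\<bar> \<le> integral\<^sup>L MM (\<lambda>x. \<bar>G x * fst (U x)\<bar>)" unfolding ell_def by (rule integral_abs_bound)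
  also have "\<dots> \<le> integral\<^sup>L MM (\<lambda>x. (l * (G x)^2 + (norm (U x))^2 / l) / 2)"
    using i Gi iU pt[OF l] by (intro integral_mono) auto
  also have "\<dots> = (l * gg + integral\<^sup>L MM (\<lambda>x. (norm (U x))^2) / l) / 2"
    using Gi iU by (simp add: gg_def)
  finally show "\<bar>ell U\<bar> \<le> (l * gg + integral\<^sup>L MM (\<lambda>x. (norm (U x))^2) / l) / 2" .
qed

lemma ell_fin:
  assumes U: "fin U" and l: "l > 0"
  shows "\<bar>ell U\<bar> \<le> (l * gg + Kc * EN U / l) / 2"
proof -
  have "\<bar>ell U\<bar> \<le> (l * gg + integral\<^sup>L MM (\<lambda>x. (norm (U x))^2) / l) / 2"
    by (rule ell_int(2)[OF fin_L2v[OF U] l])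
  also have "\<dots> \<le> (l * gg + Kc * EN U / l) / 2"
    using fin_norm(2)[OF U] l by (simp add: divide_right_mono)
  finally show ?thesis .
qed

lemma ell_lin:
  assumes U: "L2v U" and V: "L2v V"
  shows "ell (\<lambda>x. r *\<^sub>R U x + s *\<^sub>R V x) = r * ell U + s * ell V"
proof -
  have "ell (\<lambda>x. r *\<^sub>R U x + s *\<^sub>R V x) = integral\<^sup>L MM (\<lambda>x. r * (G x * fst (U x)) + s * (G x * fst (V x)))"
    unfolding ell_def by (rule Bochner_Integration.integral_cong) (simp_all add: algebra_simps)
  also have "\<dots> = r * ell U + s * ell V"
    using ell_int(1)[OF U] ell_int(1)[OF V] by (simp add: ell_def)
  finally show ?thesis .
qed

lemma ell_diff:
  assumes U: "L2v U" and V: "L2v V"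
  shows "ell (\<lambda>x. U x - V x) = ell U - ell V"
  using ell_lin[OF U V, of 1 "-1"] by simp

lemma ell_tendsto:
  assumes D: "\<And>n. fin (D n)" and E: "(\<lambda>n. EN (D n)) \<longlonglongrightarrow> 0"
  shows "(\<lambda>n. ell (D n)) \<longlonglongrightarrow> 0"
proof (rule tendsto_by_bound[OF gg_nonneg])
  show "(\<lambda>n. Kc * EN (D n)) \<longlonglongrightarrow> 0" using tendsto_mult_right_zero[OF E] by simp
  show "\<bar>ell (D n)\<bar> \<le> (l * gg + Kc * EN (D n) / l) / 2" if "l > 0" for l n by (rule ell_fin[OF D that])
qed

lemma BB_tendsto:
  assumes V: "fin V" and D: "\<And>n. fin (D n)" and E: "(\<lambda>n. EN (D n)) \<longlonglongrightarrow> 0"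
  shows "(\<lambda>n. BB V (D n)) \<longlonglongrightarrow> 0"
proof (rule tendsto_by_bound[OF EN_nonneg E])
  show "\<bar>BB V (D n)\<bar> \<le> (l * EN V + EN (D n) / l) / 2" if "l > 0" for l n by (rule BB_bound[OF V D that])
qed

lemma BB_diff2:
  assumes U: "fin U" and V: "fin V" and W: "fin W"
  shows "BB U (\<lambda>x. V x - W x) = BB U V - BB U W"
proof -
  have "BB U (\<lambda>x. V x - W x) = integral\<^sup>L MM (\<lambda>x. Bf x (U x) (V x) - Bf x (U x) (W x))"
    unfolding BB_def by (rule Bochner_Integration.integral_cong) (simp_all add: Bf_diff2)
  also have "\<dots> = BB U V - BB U W" using fin_B[OF U V] fin_B[OF U W] by (simp add: BB_def)
  finally show ?thesis .
qed

lemma BB_sym: "BB U V = BB V U"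
  unfolding BB_def by (simp add: Bf_sym)

lemma BB_self: "BB U U = EN U" unfolding BB_def EN_def ..

end

context prob
begin

definition J :: "(real \<times> real \<Rightarrow> real) \<Rightarrow> real" where
  "J f = EN (tU f) / 2 + ell (tU f)"

lemma J_lower:
  assumes f: "test f" shows "- (Kc * gg / 2) \<le> J f"
proof -
  have "\<bar>ell (tU f)\<bar> \<le> (Kc * gg + Kc * EN (tU f) / Kc) / 2"
    by (rule ell_fin[OF test_fin(1)[OF f] Kc_pos])
  then have "\<bar>ell (tU f)\<bar> \<le> (Kc * gg + EN (tU f)) / 2" using Kc_pos by simp
  then have "- ell (tU f) \<le> (Kc * gg + EN (tU f)) / 2" by (rule order_trans[OF abs_ge_minus_self])
  then show ?thesis unfolding J_def by (simp add: field_simps)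
qed

definition mu :: real where "mu = Inf (J ` {f. test f})"

lemma bdd: "bdd_below (J ` {f. test f})"
  using J_lower by (auto intro!: bdd_belowI[of _ "- (Kc * gg / 2)"])

lemma mu_le: "test f \<Longrightarrow> mu \<le> J f"
  unfolding mu_def by (rule cInf_lower[OF _ bdd]) auto

lemma mu_approx:
  assumes "e > 0" shows "\<exists>f. test f \<and> J f < mu + e"
proof -
  have ne: "J ` {f. test f} \<noteq> {}" using test_zero by auto
  have "Inf (J ` {f. test f}) < mu + e" using assms by (simp add: mu_def)
  then obtain y where "y \<in> J ` {f. test f}" "y < mu + e" using cInf_lessD[OF ne] by blast
  then show ?thesis by auto
qed

lemma EN_scale: "fin U \<Longrightarrow> EN (\<lambda>x. r *\<^sub>R U x) = r^2 * EN U"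
  unfolding EN_def fin_def by (simp add: Qf_scale)

lemma parallel:
  assumes f: "test f" and g: "test g"
  shows "EN (\<lambda>x. tU f x - tU g x) = 4 * J f + 4 * J g - 8 * J (\<lambda>x. (1/2) * f x + (1/2) * g x)"
proof -
  let ?m = "\<lambda>x. (1/2) * f x + (1/2) * g x"
  have tm: "tU ?m = (\<lambda>x. (1/2) *\<^sub>R tU f x + (1/2) *\<^sub>R tU g x)" by (rule tU_lin[OF f g])
  have Ff: "fin (tU f)" and Fg: "fin (tU g)" using test_fin f g by auto
  have Fm: "fin (\<lambda>x. (1/2) *\<^sub>R tU f x + (1/2) *\<^sub>R tU g x)" by (rule fin_lin[OF Ff Fg])
  have "EN (\<lambda>x. tU f x - tU g x) = integral\<^sup>L MM (\<lambda>x. 2 * Qf x (tU f x) + 2 * Qf x (tU g x)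
           - 4 * Qf x ((1/2) *\<^sub>R tU f x + (1/2) *\<^sub>R tU g x))"
    unfolding EN_def
  proof (rule Bochner_Integration.integral_cong[OF refl])
    fix x assume "x \<in> space MM"
    then have x: "x \<in> Om" by simp
    show "Qf x (tU f x - tU g x) = 2 * Qf x (tU f x) + 2 * Qf x (tU g x)
           - 4 * Qf x ((1/2) *\<^sub>R tU f x + (1/2) *\<^sub>R tU g x)"
      using Qf_parallel[OF x, of "tU f x" "tU g x"] by (simp add: scaleR_right_distrib)
  qed
  also have "\<dots> = 2 * EN (tU f) + 2 * EN (tU g) - 4 * EN (tU ?m)"
    using Ff Fg Fm unfolding tm by (simp add: fin_def EN_def)
  finally have e1: "EN (\<lambda>x. tU f x - tU g x) = 2 * EN (tU f) + 2 * EN (tU g) - 4 * EN (tU ?m)" .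
  have e2: "ell (tU ?m) = (1/2) * ell (tU f) + (1/2) * ell (tU g)"
    unfolding tm by (rule ell_lin[OF test_L2v[OF f] test_L2v[OF g]])
  show ?thesis unfolding J_def e1 e2 by (simp add: algebra_simps)
qed

lemma J_shift:
  assumes f: "test f" and p: "test p"
  shows "J (\<lambda>x. 1 * f x + t * p x) = J f + t * BB (tU p) (tU f) + t^2 / 2 * EN (tU p) + t * ell (tU p)"
proof -
  have tt: "tU (\<lambda>x. 1 * f x + t * p x) = (\<lambda>x. t *\<^sub>R tU p x + tU f x)"
    using tU_lin[OF f p, of 1 t] by (simp add: fun_eq_iff add.commute)
  have Ff: "fin (tU f)" and Fp: "fin (tU p)" using test_fin f p by auto
  have "EN (\<lambda>x. t *\<^sub>R tU p x + tU f x) = t^2 * EN (tU p) + 2 * t * BB (tU p) (tU f) + EN (tU f)"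
    by (rule EN_expand[OF Fp Ff])
  moreover have "ell (\<lambda>x. t *\<^sub>R tU p x + tU f x) = t * ell (tU p) + 1 * ell (tU f)"
    using ell_lin[OF test_L2v[OF p] test_L2v[OF f], of t 1] by simp
  ultimately show ?thesis unfolding J_def tt by (simp add: algebra_simps)
qed

lemma existence:
  obtains W \<phi> where "fin W" "\<And>n. test (\<phi> n)" "(\<lambda>n. EN (\<lambda>x. tU (\<phi> n) x - W x)) \<longlonglongrightarrow> 0"
    "\<And>p. test p \<Longrightarrow> BB W (tU p) + ell (tU p) = 0"
proof -
  have "\<forall>n. \<exists>f. test f \<and> J f < mu + 1 / (Suc n)" using mu_approx by simp
  then obtain \<phi> where t: "\<And>n. test (\<phi> n)" and Jl: "\<And>n. J (\<phi> n) < mu + 1 / (Suc n)" by metis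
  have Jm: "mu \<le> J (\<phi> n)" for n by (rule mu_le[OF t])
  have Jlim: "(\<lambda>n. J (\<phi> n)) \<longlonglongrightarrow> mu"
  proof (rule tendsto_sandwich[of "\<lambda>n. mu" _ _ "\<lambda>n. mu + 1 / Suc n"])
    show "\<forall>\<^sub>F n in sequentially. mu \<le> J (\<phi> n)" using Jm by simp
    show "\<forall>\<^sub>F n in sequentially. J (\<phi> n) \<le> mu + 1 / Suc n" using Jl by (simp add: less_imp_le)
    show "(\<lambda>n. mu + 1 / real (Suc n)) \<longlonglongrightarrow> mu"
      using tendsto_add[OF tendsto_const[of mu] LIMSEQ_inverse_real_of_nat] by (simp add: inverse_eq_divide)
  qed simp
  have Fphi: "fin (tU (\<phi> n))" for n using test_fin t by auto
  have cau: "\<exists>N. \<forall>n\<ge>N. \<forall>k\<ge>N. EN (\<lambda>x. tU (\<phi> n) x - tU (\<phi> k) x) < e" if e: "e > 0" for e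
  proof -
    obtain N :: nat where N: "8 / e < N" using reals_Archimedean2 by blast
    have N0: "N > 0" using N e by (metis divide_pos_pos of_nat_0_less_iff order_less_trans zero_less_numeral)
    show ?thesis
    proof (intro exI allI impI)
      fix n k assume nk: "N \<le> n" "N \<le> k"
      let ?m = "\<lambda>x. (1/2) * \<phi> n x + (1/2) * \<phi> k x"
      have "mu \<le> J ?m" by (rule mu_le[OF test_lin[OF t t]])
      then have "EN (\<lambda>x. tU (\<phi> n) x - tU (\<phi> k) x) \<le> 4 * (J (\<phi> n) - mu) + 4 * (J (\<phi> k) - mu)"
        using parallel[OF t t, of n k] by simp
      also have "\<dots> < 4 * (1 / Suc n) + 4 * (1 / Suc k)" using Jl[of n] Jl[of k] by simp
      also have "\<dots> \<le> 4 * (1 / N) + 4 * (1 / N)"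
        using nk N0 by (intro add_mono mult_left_mono divide_left_mono) auto
      also have "\<dots> < e" using N e N0 by (simp add: field_simps)
      finally show "EN (\<lambda>x. tU (\<phi> n) x - tU (\<phi> k) x) < e" .
    qed
  qed
  obtain W where fW: "fin W" and fD: "\<And>n. fin (\<lambda>x. tU (\<phi> n) x - W x)"
    and lim: "(\<lambda>n. EN (\<lambda>x. tU (\<phi> n) x - W x)) \<longlonglongrightarrow> 0"
    using comp[where \<Psi>="\<lambda>n. tU (\<phi> n)", OF Fphi cau] by blast
  have var: "BB W (tU p) + ell (tU p) = 0" if p: "test p" for p
  proof -
    have Fp: "fin (tU p)" by (rule test_fin[OF p])
    have BBlim: "(\<lambda>n. BB (tU p) (tU (\<phi> n))) \<longlonglongrightarrow> BB (tU p) W"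
    proof -
      have "(\<lambda>n. BB (tU p) (\<lambda>x. tU (\<phi> n) x - W x)) \<longlonglongrightarrow> 0" by (rule BB_tendsto[OF Fp fD lim])
      then have "(\<lambda>n. BB (tU p) (tU (\<phi> n)) - BB (tU p) W) \<longlonglongrightarrow> 0"
        using BB_diff2[OF Fp Fphi fW] by simp
      then show ?thesis by (simp add: LIM_zero_iff)
    qed
    have q: "0 \<le> s * (BB (tU p) W + ell (tU p)) + s^2 * EN (tU p) / 2" for s
    proof -
      have "mu \<le> mu + s * BB (tU p) W + s^2 / 2 * EN (tU p) + s * ell (tU p)"
      proof (rule LIMSEQ_le_const)
        show "(\<lambda>n. J (\<phi> n) + s * BB (tU p) (tU (\<phi> n)) + s^2 / 2 * EN (tU p) + s * ell (tU p)) \<longlonglongrightarrow>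
              mu + s * BB (tU p) W + s^2 / 2 * EN (tU p) + s * ell (tU p)"
          using Jlim BBlim by (intro tendsto_intros)
        have "mu \<le> J (\<phi> n) + s * BB (tU p) (tU (\<phi> n)) + s^2 / 2 * EN (tU p) + s * ell (tU p)" for n
          using mu_le[OF test_lin[OF t p, of 1 n s]] J_shift[OF t p, of n s] by simp
        then show "\<exists>N. \<forall>n\<ge>N. mu \<le> J (\<phi> n) + s * BB (tU p) (tU (\<phi> n)) + s^2 / 2 * EN (tU p) + s * ell (tU p)"
          by blast
      qed
      then show ?thesis by (simp add: algebra_simps)
    qed
    have "BB (tU p) W + ell (tU p) = 0" by (rule quad_zero[OF EN_nonneg q])
    then show ?thesis by (simp add: BB_sym)
  qed
  show ?thesis using that[OF fW t lim var] .
qed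

end

context prob
begin

lemma ext:
  assumes fW: "fin W" and var: "\<And>p. test p \<Longrightarrow> BB W (tU p) + ell (tU p) = 0"
    and fV: "fin V" and t: "\<And>k. test (\<psi> k)" and lim: "(\<lambda>k. EN (\<lambda>x. tU (\<psi> k) x - V x)) \<longlonglongrightarrow> 0"
  shows "BB W V + ell V = 0"
proof -
  have Ft: "fin (tU (\<psi> k))" for k using test_fin t by auto
  have fD: "fin (\<lambda>x. tU (\<psi> k) x - V x)" for k by (rule fin_diff[OF Ft fV])
  have "(\<lambda>k. BB W (\<lambda>x. tU (\<psi> k) x - V x)) \<longlonglongrightarrow> 0" by (rule BB_tendsto[OF fW fD lim])
  then have l1: "(\<lambda>k. BB W (tU (\<psi> k)) - BB W V) \<longlonglongrightarrow> 0" using BB_diff2[OF fW Ft fV] by simp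
  have "(\<lambda>k. ell (\<lambda>x. tU (\<psi> k) x - V x)) \<longlonglongrightarrow> 0" by (rule ell_tendsto[OF fD lim])
  then have l2: "(\<lambda>k. ell (tU (\<psi> k)) - ell V) \<longlonglongrightarrow> 0"
    using ell_diff[OF test_L2v[OF t] fin_L2v[OF fV]] by simp
  have "(\<lambda>k. (BB W (tU (\<psi> k)) - BB W V) + (ell (tU (\<psi> k)) - ell V)) \<longlonglongrightarrow> 0 + 0"
    by (rule tendsto_add[OF l1 l2])
  moreover have "(BB W (tU (\<psi> k)) - BB W V) + (ell (tU (\<psi> k)) - ell V) = - (BB W V + ell V)" for k
    using var[OF t[of k]] by simp
  ultimately have "(\<lambda>k. - (BB W V + ell V)) \<longlonglongrightarrow> 0" by simp
  then have "- (BB W V + ell V) = 0" by (simp add: LIMSEQ_const_iff)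
  then show ?thesis by simp
qed

lemma fin_cong:
  assumes "fin U" "\<And>x. x \<in> Om \<Longrightarrow> U' x = U x"
  shows "fin U'"
proof -
  have "U' \<in> borel_measurable MM" using assms measurable_cong[of MM U' U] by (simp add: fin_def)
  moreover have "integrable MM (\<lambda>x. Qf x (U' x))"
    using assms by (subst Bochner_Integration.integrable_cong[OF refl, where g = "\<lambda>x. Qf x (U x)"]) (auto simp: fin_def)
  ultimately show ?thesis by (simp add: fin_def)
qed

lemma prob_main:
  obtains W \<phi> where "fin W" "\<And>x. x \<notin> Om \<Longrightarrow> W x = 0" "\<And>n. test (\<phi> n)"
    "(\<lambda>n. EN (\<lambda>x. tU (\<phi> n) x - W x)) \<longlonglongrightarrow> 0"
    "\<And>V VR VT. H10 V VR VT \<Longrightarrow> BB W (trip V VR VT) + ell (trip V VR VT) = 0"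
    "EN W \<le> Kc * gg"
proof -
  obtain W0 \<phi> where fW0: "fin W0" and t: "\<And>n. test (\<phi> n)"
    and lim0: "(\<lambda>n. EN (\<lambda>x. tU (\<phi> n) x - W0 x)) \<longlonglongrightarrow> 0"
    and var0: "\<And>p. test p \<Longrightarrow> BB W0 (tU p) + ell (tU p) = 0"
    using existence by blast
  define W where "W x = (if x \<in> Om then W0 x else 0)" for x
  have eq: "x \<in> Om \<Longrightarrow> W x = W0 x" for x by (simp add: W_def)
  have fW: "fin W" by (rule fin_cong[OF fW0 eq])
  have z: "x \<notin> Om \<Longrightarrow> W x = 0" for x by (simp add: W_def)
  have ENc: "EN (\<lambda>x. U x - W x) = EN (\<lambda>x. U x - W0 x)" for U
    unfolding EN_def by (rule Bochner_Integration.integral_cong) (auto simp: eq)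
  have BBc: "BB W V = BB W0 V" for V
    unfolding BB_def by (rule Bochner_Integration.integral_cong) (auto simp: eq)
  have lim: "(\<lambda>n. EN (\<lambda>x. tU (\<phi> n) x - W x)) \<longlonglongrightarrow> 0" using lim0 by (simp add: ENc)
  have var: "BB W (tU p) + ell (tU p) = 0" if "test p" for p using var0[OF that] by (simp add: BBc)
  have sol: "BB W (trip V VR VT) + ell (trip V VR VT) = 0" if H: "H10 V VR VT" for V VR VT
  proof -
    obtain \<psi> where "\<forall>n. test (\<psi> n)" "(\<lambda>n. EN (\<lambda>x. tU (\<psi> n) x - trip V VR VT x)) \<longlonglongrightarrow> 0"
      using closure(2)[OF H] by blast
    then show ?thesis using ext[OF fW var closure(1)[OF H]] by blast
  qed
  have "BB W W + ell W = 0" by (rule ext[OF fW var fW t lim])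
  then have "EN W = - ell W" by (simp add: BB_self)
  also have "\<dots> \<le> \<bar>ell W\<bar>" by simp
  also have "\<dots> \<le> (Kc * gg + Kc * EN W / Kc) / 2" by (rule ell_fin[OF fW Kc_pos])
  also have "\<dots> = (Kc * gg + EN W) / 2" using Kc_pos by simp
  finally have "EN W \<le> Kc * gg" by simp
  then show ?thesis using that[OF fW z t lim sol] by blast
qed

end

lemma amgm2:
  fixes p q l :: real
  assumes "l > 0"
  shows "\<bar>p * q\<bar> \<le> (l * p^2 + q^2 / l) / 2"
proof -
  have "0 \<le> (l * \<bar>p\<bar> - \<bar>q\<bar>)^2" by simp
  then have "2 * l * \<bar>p * q\<bar> \<le> l^2 * p^2 + q^2" by (simp add: power2_eq_square algebra_simps abs_mult)
  then show ?thesis using assms by (simp add: field_simps power2_eq_square)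
qed

lemma L2_prod:
  assumes f: "L2 f" and h: "L2 h"
  shows "integrable MM (\<lambda>x. f x * h x)"
    "\<And>l. l > 0 \<Longrightarrow> \<bar>integral\<^sup>L MM (\<lambda>x. f x * h x)\<bar> \<le> (l * integral\<^sup>L MM (\<lambda>x. (h x)^2) + integral\<^sup>L MM (\<lambda>x. (f x)^2) / l) / 2"
proof -
  have mf: "f \<in> borel_measurable MM" and i_f: "integrable MM (\<lambda>x. (f x)^2)"
   and mh: "h \<in> borel_measurable MM" and ih: "integrable MM (\<lambda>x. (h x)^2)"
    using f h by (auto simp: L2_MM)
  have m: "(\<lambda>x. f x * h x) \<in> borel_measurable MM" using mf mh by (rule borel_measurable_times)
  have pt: "\<bar>f x * h x\<bar> \<le> (l * (h x)^2 + (f x)^2 / l) / 2" if "l > 0" for x l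
    using amgm2[OF that, of "h x" "f x"] by (simp add: mult.commute)
  show i: "integrable MM (\<lambda>x. f x * h x)"
    using i_f ih pt[of 1] by (intro int_dom[OF _ m, of "\<lambda>x. (1 * (h x)^2 + (f x)^2 / 1) / 2"]) auto
  fix l :: real assume l: "l > 0"
  have "\<bar>integral\<^sup>L MM (\<lambda>x. f x * h x)\<bar> \<le> integral\<^sup>L MM (\<lambda>x. \<bar>f x * h x\<bar>)" by (rule integral_abs_bound)
  also have "\<dots> \<le> integral\<^sup>L MM (\<lambda>x. (l * (h x)^2 + (f x)^2 / l) / 2)"
    using i i_f ih pt[OF l] by (intro integral_mono) auto
  also have "\<dots> = (l * integral\<^sup>L MM (\<lambda>x. (h x)^2) + integral\<^sup>L MM (\<lambda>x. (f x)^2) / l) / 2"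
    using i_f ih by simp
  finally show "\<bar>integral\<^sup>L MM (\<lambda>x. f x * h x)\<bar> \<le> (l * integral\<^sup>L MM (\<lambda>x. (h x)^2) + integral\<^sup>L MM (\<lambda>x. (f x)^2) / l) / 2" .
qed

lemma L2_lim:
  assumes f: "\<And>n. L2 (f n)" and h: "L2 h" and c: "(\<lambda>n. integral\<^sup>L MM (\<lambda>x. (f n x)^2)) \<longlonglongrightarrow> 0"
  shows "(\<lambda>n. integral\<^sup>L MM (\<lambda>x. f n x * h x)) \<longlonglongrightarrow> 0"
proof (rule tendsto_by_bound[OF _ c])
  show "0 \<le> integral\<^sup>L MM (\<lambda>x. (h x)^2)" by (auto intro: Bochner_Integration.integral_nonneg)
  show "\<bar>integral\<^sup>L MM (\<lambda>x. f n x * h x)\<bar> \<le> (l * integral\<^sup>L MM (\<lambda>x. (h x)^2) + integral\<^sup>L MM (\<lambda>x. (f n x)^2) / l) / 2"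
    if "l > 0" for l n by (rule L2_prod(2)[OF f h that])
qed

lemma cont_L2: "continuous_on UNIV f \<Longrightarrow> L2 f"
proof -
  assume c: "continuous_on UNIV f"
  then have "f \<in> borel_measurable borel" by (rule borel_measurable_continuous_onI)
  then have "f \<in> borel_measurable lborel" by simp
  then have "f \<in> borel_measurable MM" by (rule measurable_restrict_space1)
  moreover have "integrable MM (\<lambda>x. (f x)^2)" using c by (intro test_cont_integrable continuous_intros)
  ultimately show "L2 f" by (simp add: L2_MM)
qed

lemma test_L2: assumes "test f" shows "L2 f" "L2 (dR f)" "L2 (dT f)"
  using test_cont[OF assms] by (auto intro: cont_L2)

lemma weak_derivs_MM:
  "weak_derivs u gR gT \<longleftrightarrow> (\<forall>\<phi>. test \<phi> \<longrightarrow>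
     integral\<^sup>L MM (\<lambda>x. u x * dR \<phi> x) = - integral\<^sup>L MM (\<lambda>x. gR x * \<phi> x) \<and>
     integral\<^sup>L MM (\<lambda>x. u x * dT \<phi> x) = - integral\<^sup>L MM (\<lambda>x. gT x * \<phi> x))"
  unfolding weak_derivs_def integral_MM ..

lemma H10_iff:
  "H10 V VR VT \<longleftrightarrow> H1 V VR VT \<and> (\<exists>\<phi>. (\<forall>n. test (\<phi> n)) \<and>
     (\<lambda>n. integral\<^sup>L MM (\<lambda>x. (norm (tU (\<phi> n) x - trip V VR VT x))^2)) \<longlonglongrightarrow> 0)"
proof -
  have e: "integral\<^sup>L MM (\<lambda>x. (norm (tU f x - trip V VR VT x))^2) =
        (LINT x:Om|lborel. (f x - V x)^2 + (dR f x - VR x)^2 + (dT f x - VT x)^2)" for f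
    unfolding integral_MM by (simp add: tU_def trip_def norm3)
  show ?thesis unfolding H10_def e ..
qed

lemma L2_diff:
  assumes f: "L2 f" and g: "L2 g" shows "L2 (\<lambda>x. f x - g x)"
proof -
  have mf: "f \<in> borel_measurable MM" and i_f: "integrable MM (\<lambda>x. (f x)^2)"
   and mg: "g \<in> borel_measurable MM" and ig: "integrable MM (\<lambda>x. (g x)^2)"
    using f g by (auto simp: L2_MM)
  have m: "(\<lambda>x. f x - g x) \<in> borel_measurable MM" using mf mg by (rule borel_measurable_diff)
  have "integrable MM (\<lambda>x. (f x - g x)^2)"
  proof (rule int_dom)
    show "integrable MM (\<lambda>x. 2 * (f x)^2 + 2 * (g x)^2)" using i_f ig by simp
    show "(\<lambda>x. (f x - g x)^2) \<in> borel_measurable MM" using m by measurable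
    show "\<bar>(f x - g x)^2\<bar> \<le> 2 * (f x)^2 + 2 * (g x)^2" for x
      using norm_diff_sq[of "f x" "g x"] by simp
  qed
  then show ?thesis using m by (simp add: L2_MM)
qed

lemma H10_diff:
  assumes H1: "H10 V1 R1 T1" and H2: "H10 V2 R2 T2"
  shows "H10 (\<lambda>x. V1 x - V2 x) (\<lambda>x. R1 x - R2 x) (\<lambda>x. T1 x - T2 x)"
proof -
  have h1: "H1 V1 R1 T1" and h2: "H1 V2 R2 T2" using H1 H2 by (auto simp: H10_iff)
  have L: "L2 V1" "L2 R1" "L2 T1" "L2 V2" "L2 R2" "L2 T2" using h1 h2 by (auto simp: H1_def)
  have wd: "weak_derivs (\<lambda>x. V1 x - V2 x) (\<lambda>x. R1 x - R2 x) (\<lambda>x. T1 x - T2 x)"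
    unfolding weak_derivs_MM
  proof (intro allI impI conjI)
    fix \<phi> assume t: "test \<phi>"
    note tl = test_L2[OF t]
    have w1: "integral\<^sup>L MM (\<lambda>x. V1 x * dR \<phi> x) = - integral\<^sup>L MM (\<lambda>x. R1 x * \<phi> x)"
             "integral\<^sup>L MM (\<lambda>x. V1 x * dT \<phi> x) = - integral\<^sup>L MM (\<lambda>x. T1 x * \<phi> x)"
      using h1 t unfolding H1_def weak_derivs_MM by auto
    have w2: "integral\<^sup>L MM (\<lambda>x. V2 x * dR \<phi> x) = - integral\<^sup>L MM (\<lambda>x. R2 x * \<phi> x)"
             "integral\<^sup>L MM (\<lambda>x. V2 x * dT \<phi> x) = - integral\<^sup>L MM (\<lambda>x. T2 x * \<phi> x)"
      using h2 t unfolding H1_def weak_derivs_MM by auto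
    have "integral\<^sup>L MM (\<lambda>x. (V1 x - V2 x) * dR \<phi> x) = integral\<^sup>L MM (\<lambda>x. V1 x * dR \<phi> x) - integral\<^sup>L MM (\<lambda>x. V2 x * dR \<phi> x)"
      using L2_prod(1)[OF L(1) tl(2)] L2_prod(1)[OF L(4) tl(2)] by (simp add: left_diff_distrib)
    moreover have "integral\<^sup>L MM (\<lambda>x. (R1 x - R2 x) * \<phi> x) = integral\<^sup>L MM (\<lambda>x. R1 x * \<phi> x) - integral\<^sup>L MM (\<lambda>x. R2 x * \<phi> x)"
      using L2_prod(1)[OF L(2) tl(1)] L2_prod(1)[OF L(5) tl(1)] by (simp add: left_diff_distrib)
    ultimately show "integral\<^sup>L MM (\<lambda>x. (V1 x - V2 x) * dR \<phi> x) = - integral\<^sup>L MM (\<lambda>x. (R1 x - R2 x) * \<phi> x)"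
      using w1 w2 by simp
    have "integral\<^sup>L MM (\<lambda>x. (V1 x - V2 x) * dT \<phi> x) = integral\<^sup>L MM (\<lambda>x. V1 x * dT \<phi> x) - integral\<^sup>L MM (\<lambda>x. V2 x * dT \<phi> x)"
      using L2_prod(1)[OF L(1) tl(3)] L2_prod(1)[OF L(4) tl(3)] by (simp add: left_diff_distrib)
    moreover have "integral\<^sup>L MM (\<lambda>x. (T1 x - T2 x) * \<phi> x) = integral\<^sup>L MM (\<lambda>x. T1 x * \<phi> x) - integral\<^sup>L MM (\<lambda>x. T2 x * \<phi> x)"
      using L2_prod(1)[OF L(3) tl(1)] L2_prod(1)[OF L(6) tl(1)] by (simp add: left_diff_distrib)
    ultimately show "integral\<^sup>L MM (\<lambda>x. (V1 x - V2 x) * dT \<phi> x) = - integral\<^sup>L MM (\<lambda>x. (T1 x - T2 x) * \<phi> x)"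
      using w1 w2 by simp
  qed
  have hd: "H1 (\<lambda>x. V1 x - V2 x) (\<lambda>x. R1 x - R2 x) (\<lambda>x. T1 x - T2 x)"
    unfolding H1_def using wd L by (auto intro: L2_diff)
  obtain \<phi>1 where t1: "\<And>n. test (\<phi>1 n)" and c1: "(\<lambda>n. integral\<^sup>L MM (\<lambda>x. (norm (tU (\<phi>1 n) x - trip V1 R1 T1 x))^2)) \<longlonglongrightarrow> 0"
    using H1 by (auto simp: H10_iff)
  obtain \<phi>2 where t2: "\<And>n. test (\<phi>2 n)" and c2: "(\<lambda>n. integral\<^sup>L MM (\<lambda>x. (norm (tU (\<phi>2 n) x - trip V2 R2 T2 x))^2)) \<longlonglongrightarrow> 0"
    using H2 by (auto simp: H10_iff)
  let ?p = "\<lambda>n x. 1 * \<phi>1 n x + (-1) * \<phi>2 n x"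
  have tp: "test (?p n)" for n by (rule test_lin[OF t1 t2])
  have LV1: "L2v (trip V1 R1 T1)" and LV2: "L2v (trip V2 R2 T2)" using h1 h2 by (auto intro: H1_L2v)
  have D1: "L2v (\<lambda>x. tU (\<phi>1 n) x - trip V1 R1 T1 x)" for n by (rule L2v_diff(1)[OF test_L2v[OF t1] LV1])
  have D2: "L2v (\<lambda>x. tU (\<phi>2 n) x - trip V2 R2 T2 x)" for n by (rule L2v_diff(1)[OF test_L2v[OF t2] LV2])
  have eqp: "tU (?p n) x - trip (\<lambda>x. V1 x - V2 x) (\<lambda>x. R1 x - R2 x) (\<lambda>x. T1 x - T2 x) x =
        (tU (\<phi>1 n) x - trip V1 R1 T1 x) - (tU (\<phi>2 n) x - trip V2 R2 T2 x)" for n x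
    using tU_lin[OF t1 t2, of 1 n "-1" n] by (simp add: trip_def)
  have "(\<lambda>n. integral\<^sup>L MM (\<lambda>x. (norm (tU (?p n) x - trip (\<lambda>x. V1 x - V2 x) (\<lambda>x. R1 x - R2 x) (\<lambda>x. T1 x - T2 x) x))^2)) \<longlonglongrightarrow> 0"
  proof (rule tendsto_sandwich[of "\<lambda>n. 0" _ _ "\<lambda>n. 2 * integral\<^sup>L MM (\<lambda>x. (norm (tU (\<phi>1 n) x - trip V1 R1 T1 x))^2)
        + 2 * integral\<^sup>L MM (\<lambda>x. (norm (tU (\<phi>2 n) x - trip V2 R2 T2 x))^2)"])
    show "\<forall>\<^sub>F n in sequentially. 0 \<le> integral\<^sup>L MM (\<lambda>x. (norm (tU (?p n) x - trip (\<lambda>x. V1 x - V2 x) (\<lambda>x. R1 x - R2 x) (\<lambda>x. T1 x - T2 x) x))^2)"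
      by (auto intro: Bochner_Integration.integral_nonneg)
    show "\<forall>\<^sub>F n in sequentially. integral\<^sup>L MM (\<lambda>x. (norm (tU (?p n) x - trip (\<lambda>x. V1 x - V2 x) (\<lambda>x. R1 x - R2 x) (\<lambda>x. T1 x - T2 x) x))^2)
       \<le> 2 * integral\<^sup>L MM (\<lambda>x. (norm (tU (\<phi>1 n) x - trip V1 R1 T1 x))^2)
        + 2 * integral\<^sup>L MM (\<lambda>x. (norm (tU (\<phi>2 n) x - trip V2 R2 T2 x))^2)"
      unfolding eqp using L2v_diff(2)[OF D1 D2] by simp
    show "(\<lambda>n. 2 * integral\<^sup>L MM (\<lambda>x. (norm (tU (\<phi>1 n) x - trip V1 R1 T1 x))^2)
        + 2 * integral\<^sup>L MM (\<lambda>x. (norm (tU (\<phi>2 n) x - trip V2 R2 T2 x))^2)) \<longlonglongrightarrow> 0"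
      using c1 c2 by (auto intro!: tendsto_eq_intros)
  qed simp
  then show ?thesis unfolding H10_iff using hd tp
    by (intro conjI exI[where x = "\<lambda>n x. 1 * \<phi>1 n x + (-1) * \<phi>2 n x"]) auto
qed

lemma rho_Om: "x \<in> Om \<Longrightarrow> 0 < rho (fst x)"
  using Om_fst rho_pos by blast

lemma powr_pos_Om: "x \<in> Om \<Longrightarrow> rho (fst x) powr p > 0"
proof -
  assume "x \<in> Om"
  then have "0 < rho (fst x)" by (rule rho_Om)
  then show ?thesis by simp
qed

lemma uniq_main:
  fixes a m :: real
  assumes a: "a \<ge> 4" and m: "m \<ge> 6"
    and H1: "H10 (\<lambda>x. rho (fst x) powr (m - 1) * w1 x) R1 T1"
    and S1: "weak_sol a m F (\<lambda>x. rho (fst x) powr (m - 1) * w1 x) R1 T1"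
    and H2: "H10 (\<lambda>x. rho (fst x) powr (m - 1) * w2 x) R2 T2"
    and S2: "weak_sol a m F (\<lambda>x. rho (fst x) powr (m - 1) * w2 x) R2 T2"
  shows "AE x in lborel. x \<in> Om \<longrightarrow> w1 x = w2 x"
proof -
  have c0: "(m - 1) * (m - 2) > 0" using m by simp
  interpret S: setting a "(m - 1) * (m - 2)" using a c0 by unfold_locales
  define W1 where "W1 x = rho (fst x) powr (m - 1) * w1 x" for x
  define W2 where "W2 x = rho (fst x) powr (m - 1) * w2 x" for x
  have H1': "H10 W1 R1 T1" and H2': "H10 W2 R2 T2" using H1 H2 by (simp_all add: W1_def[abs_def] W2_def[abs_def])
  have S1': "weak_sol a m F W1 R1 T1" and S2': "weak_sol a m F W2 R2 T2"
    using S1 S2 by (simp_all add: W1_def[abs_def] W2_def[abs_def])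
  let ?V = "\<lambda>x. W1 x - W2 x" and ?VR = "\<lambda>x. R1 x - R2 x" and ?VT = "\<lambda>x. T1 x - T2 x"
  have HV: "H10 ?V ?VR ?VT" by (rule H10_diff[OF H1' H2'])
  let ?VV = "trip ?V ?VR ?VT"
  have Ieq: "\<And>W R T. (\<lambda>x. (R x * ?VR x + T x * ?VT x / (fst x + a - 4)^2
                    + (m - 1) * (m - 2) / (rho (fst x))^2 * W x * ?V x) * (fst x + a - 4))
             = (\<lambda>x. S.Bf x (trip W R T x) (?VV x))"
    by (simp add: S.Bf_def trip_def fun_eq_iff)
  have s1: "set_integrable lborel Om (\<lambda>x. S.Bf x (trip W1 R1 T1 x) (?VV x))"
    "(LINT x:Om|lborel. S.Bf x (trip W1 R1 T1 x) (?VV x)) =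
       - (LINT x:Om|lborel. rho (fst x) powr (m - 2) * F x * ?V x * (fst x + a - 4))"
    using S1'[unfolded weak_sol_def, rule_format, OF HV] unfolding Let_def Ieq by auto
  have s2: "set_integrable lborel Om (\<lambda>x. S.Bf x (trip W2 R2 T2 x) (?VV x))"
    "(LINT x:Om|lborel. S.Bf x (trip W2 R2 T2 x) (?VV x)) =
       - (LINT x:Om|lborel. rho (fst x) powr (m - 2) * F x * ?V x * (fst x + a - 4))"
    using S2'[unfolded weak_sol_def, rule_format, OF HV] unfolding Let_def Ieq by auto
  have i1: "integrable MM (\<lambda>x. S.Bf x (trip W1 R1 T1 x) (?VV x))"
   and i2: "integrable MM (\<lambda>x. S.Bf x (trip W2 R2 T2 x) (?VV x))"
    using s1(1) s2(1) by (simp_all add: integrable_MM_iff)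
  have Qe: "S.Bf x (trip W1 R1 T1 x) (?VV x) - S.Bf x (trip W2 R2 T2 x) (?VV x) = S.Bf x (?VV x) (?VV x)" for x
  proof -
    have "trip W1 R1 T1 x - trip W2 R2 T2 x = ?VV x" by (simp add: trip_def)
    then show ?thesis using S.Bf_diff1[of x "trip W1 R1 T1 x" "trip W2 R2 T2 x" "?VV x"] by simp
  qed
  have iQ: "integrable MM (\<lambda>x. S.Bf x (?VV x) (?VV x))"
    using Bochner_Integration.integrable_diff[OF i1 i2] unfolding Qe .
  have "integral\<^sup>L MM (\<lambda>x. S.Bf x (?VV x) (?VV x)) =
        integral\<^sup>L MM (\<lambda>x. S.Bf x (trip W1 R1 T1 x) (?VV x)) - integral\<^sup>L MM (\<lambda>x. S.Bf x (trip W2 R2 T2 x) (?VV x))"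
    using Bochner_Integration.integral_diff[OF i1 i2] unfolding Qe by simp
  also have "\<dots> = 0" using s1(2) s2(2) by (simp add: integral_MM)
  finally have Q0: "integral\<^sup>L MM (\<lambda>x. S.Bf x (?VV x) (?VV x)) = 0" .
  have nn: "AE x in MM. 0 \<le> S.Bf x (?VV x) (?VV x)"
    by (intro AE_I2) (simp add: space_restrict_space S.Qf_nonneg)
  have "AE x in MM. S.Bf x (?VV x) (?VV x) = 0" using Q0 integral_nonneg_eq_0_iff_AE[OF iQ nn] by simp
  then have "AE x in MM. w1 x = w2 x"
  proof (rule AE_mp, intro AE_I2 impI)
    fix x assume x: "x \<in> space MM" and q: "S.Bf x (?VV x) (?VV x) = 0"
    then have xO: "x \<in> Om" by simp
    have "(norm (?VV x))^2 \<le> S.Kc * 0" using S.Qf_coer[OF xO, of "?VV x"] q by simp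
    then have "?VV x = 0" by simp
    then have "W1 x = W2 x" by (simp add: trip_def zero_prod_def)
    then show "w1 x = w2 x" using powr_pos_Om[OF xO, of "m - 1"] by (simp add: W1_def W2_def)
  qed
  then show ?thesis by (simp add: AE_restrict_space_iff)
qed

lemma L2v_comp:
  assumes "L2v U"
  shows "L2 (\<lambda>x. fst (U x))" "L2 (\<lambda>x. fst (snd (U x)))" "L2 (\<lambda>x. snd (snd (U x)))"
proof -
  have m: "U \<in> borel_measurable MM" and i: "integrable MM (\<lambda>x. (norm (U x))^2)"
    using assms by (auto simp: L2v_def)
  have m1: "(\<lambda>x. fst (U x)) \<in> borel_measurable MM" by (rule meas_c1[OF m])
  have m2: "(\<lambda>x. fst (snd (U x))) \<in> borel_measurable MM" by (rule meas_c2[OF m])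
  have m3: "(\<lambda>x. snd (snd (U x))) \<in> borel_measurable MM" by (rule meas_c3[OF m])
  have "integrable MM (\<lambda>x. (fst (U x))^2)"
  proof (rule int_dom[OF i])
    show "(\<lambda>x. (fst (U x))^2) \<in> borel_measurable MM" using m1 by (rule borel_measurable_power)
    show "\<bar>(fst (U x))^2\<bar> \<le> (norm (U x))^2" for x by (simp add: norm3)
  qed
  then show "L2 (\<lambda>x. fst (U x))" using m1 by (simp add: L2_MM)
  have "integrable MM (\<lambda>x. (fst (snd (U x)))^2)"
  proof (rule int_dom[OF i])
    show "(\<lambda>x. (fst (snd (U x)))^2) \<in> borel_measurable MM" using m2 by (rule borel_measurable_power)
    show "\<bar>(fst (snd (U x)))^2\<bar> \<le> (norm (U x))^2" for x by (simp add: norm3)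
  qed
  then show "L2 (\<lambda>x. fst (snd (U x)))" using m2 by (simp add: L2_MM)
  have "integrable MM (\<lambda>x. (snd (snd (U x)))^2)"
  proof (rule int_dom[OF i])
    show "(\<lambda>x. (snd (snd (U x)))^2) \<in> borel_measurable MM" using m3 by (rule borel_measurable_power)
    show "\<bar>(snd (snd (U x)))^2\<bar> \<le> (norm (U x))^2" for x by (simp add: norm3)
  qed
  then show "L2 (\<lambda>x. snd (snd (U x)))" using m3 by (simp add: L2_MM)
qed

lemma lim_int:
  assumes g: "\<And>n. L2 (g n)" and g0: "L2 g0" and h: "L2 h"
    and c: "(\<lambda>n. integral\<^sup>L MM (\<lambda>x. (g n x - g0 x)^2)) \<longlonglongrightarrow> 0"
  shows "(\<lambda>n. integral\<^sup>L MM (\<lambda>x. g n x * h x)) \<longlonglongrightarrow> integral\<^sup>L MM (\<lambda>x. g0 x * h x)"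
proof -
  have "(\<lambda>n. integral\<^sup>L MM (\<lambda>x. (g n x - g0 x) * h x)) \<longlonglongrightarrow> 0"
    by (rule L2_lim[OF L2_diff[OF g g0] h c])
  moreover have "integral\<^sup>L MM (\<lambda>x. (g n x - g0 x) * h x) = integral\<^sup>L MM (\<lambda>x. g n x * h x) - integral\<^sup>L MM (\<lambda>x. g0 x * h x)" for n
    using L2_prod(1)[OF g h] L2_prod(1)[OF g0 h] by (simp add: left_diff_distrib)
  ultimately show ?thesis by (simp add: LIM_zero_iff)
qed

lemma comp_conv:
  assumes t: "\<And>n. test (\<phi> n)" and W: "L2v W"
    and conv: "(\<lambda>n. integral\<^sup>L MM (\<lambda>x. (norm (tU (\<phi> n) x - W x))^2)) \<longlonglongrightarrow> 0"
  shows "(\<lambda>n. integral\<^sup>L MM (\<lambda>x. (\<phi> n x - fst (W x))^2)) \<longlonglongrightarrow> 0"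
    "(\<lambda>n. integral\<^sup>L MM (\<lambda>x. (dR (\<phi> n) x - fst (snd (W x)))^2)) \<longlonglongrightarrow> 0"
    "(\<lambda>n. integral\<^sup>L MM (\<lambda>x. (dT (\<phi> n) x - snd (snd (W x)))^2)) \<longlonglongrightarrow> 0"
proof -
  note Wc = L2v_comp[OF W]
  have iN: "integrable MM (\<lambda>x. (norm (tU (\<phi> n) x - W x))^2)" for n
    using L2v_diff(1)[OF test_L2v[OF t] W] by (simp add: L2v_def)
  have i1: "integrable MM (\<lambda>x. (\<phi> n x - fst (W x))^2)" for n
    using L2_diff[OF test_L2(1)[OF t] Wc(1)] by (simp add: L2_MM)
  have i2: "integrable MM (\<lambda>x. (dR (\<phi> n) x - fst (snd (W x)))^2)" for n
    using L2_diff[OF test_L2(2)[OF t] Wc(2)] by (simp add: L2_MM)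
  have i3: "integrable MM (\<lambda>x. (dT (\<phi> n) x - snd (snd (W x)))^2)" for n
    using L2_diff[OF test_L2(3)[OF t] Wc(3)] by (simp add: L2_MM)
  have nrm: "(norm (tU (\<phi> n) x - W x))^2 = (\<phi> n x - fst (W x))^2 + (dR (\<phi> n) x - fst (snd (W x)))^2
      + (dT (\<phi> n) x - snd (snd (W x)))^2" for n x
    by (simp add: norm3 tU_def)
  show "(\<lambda>n. integral\<^sup>L MM (\<lambda>x. (\<phi> n x - fst (W x))^2)) \<longlonglongrightarrow> 0"
  proof (rule tendsto_sandwich[OF _ _ tendsto_const conv])
    show "\<forall>\<^sub>F n in sequentially. 0 \<le> integral\<^sup>L MM (\<lambda>x. (\<phi> n x - fst (W x))^2)" by simp
    show "\<forall>\<^sub>F n in sequentially. integral\<^sup>L MM (\<lambda>x. (\<phi> n x - fst (W x))^2) \<le> integral\<^sup>L MM (\<lambda>x. (norm (tU (\<phi> n) x - W x))^2)"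
      using i1 iN by (intro always_eventually allI integral_mono) (auto simp: nrm)
  qed
  show "(\<lambda>n. integral\<^sup>L MM (\<lambda>x. (dR (\<phi> n) x - fst (snd (W x)))^2)) \<longlonglongrightarrow> 0"
  proof (rule tendsto_sandwich[OF _ _ tendsto_const conv])
    show "\<forall>\<^sub>F n in sequentially. 0 \<le> integral\<^sup>L MM (\<lambda>x. (dR (\<phi> n) x - fst (snd (W x)))^2)" by simp
    show "\<forall>\<^sub>F n in sequentially. integral\<^sup>L MM (\<lambda>x. (dR (\<phi> n) x - fst (snd (W x)))^2) \<le> integral\<^sup>L MM (\<lambda>x. (norm (tU (\<phi> n) x - W x))^2)"
      using i2 iN by (intro always_eventually allI integral_mono) (auto simp: nrm)
  qed
  show "(\<lambda>n. integral\<^sup>L MM (\<lambda>x. (dT (\<phi> n) x - snd (snd (W x)))^2)) \<longlonglongrightarrow> 0"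
  proof (rule tendsto_sandwich[OF _ _ tendsto_const conv])
    show "\<forall>\<^sub>F n in sequentially. 0 \<le> integral\<^sup>L MM (\<lambda>x. (dT (\<phi> n) x - snd (snd (W x)))^2)" by simp
    show "\<forall>\<^sub>F n in sequentially. integral\<^sup>L MM (\<lambda>x. (dT (\<phi> n) x - snd (snd (W x)))^2) \<le> integral\<^sup>L MM (\<lambda>x. (norm (tU (\<phi> n) x - W x))^2)"
      using i3 iN by (intro always_eventually allI integral_mono) (auto simp: nrm)
  qed
qed

lemma weak_limit:
  assumes t: "\<And>n. test (\<phi> n)" and W: "L2v W"
    and conv: "(\<lambda>n. integral\<^sup>L MM (\<lambda>x. (norm (tU (\<phi> n) x - W x))^2)) \<longlonglongrightarrow> 0"
  shows "weak_derivs (\<lambda>x. fst (W x)) (\<lambda>x. fst (snd (W x))) (\<lambda>x. snd (snd (W x)))"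
  unfolding weak_derivs_MM
proof (intro allI impI conjI)
  fix chi assume c: "test chi"
  note Wc = L2v_comp[OF W] and cc = comp_conv[OF t W conv] and tl = test_L2[OF t] and cl = test_L2[OF c]
  have a1: "(\<lambda>n. integral\<^sup>L MM (\<lambda>x. \<phi> n x * dR chi x)) \<longlonglongrightarrow> integral\<^sup>L MM (\<lambda>x. fst (W x) * dR chi x)"
    by (rule lim_int[OF tl(1) Wc(1) cl(2) cc(1)])
  have a2: "(\<lambda>n. integral\<^sup>L MM (\<lambda>x. dR (\<phi> n) x * chi x)) \<longlonglongrightarrow> integral\<^sup>L MM (\<lambda>x. fst (snd (W x)) * chi x)"
    by (rule lim_int[OF tl(2) Wc(2) cl(1) cc(2)])
  have "(\<lambda>n. integral\<^sup>L MM (\<lambda>x. \<phi> n x * dR chi x)) \<longlonglongrightarrow> - integral\<^sup>L MM (\<lambda>x. fst (snd (W x)) * chi x)"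
    using tendsto_minus[OF a2] weak_R[OF t c] by simp
  then show "integral\<^sup>L MM (\<lambda>x. fst (W x) * dR chi x) = - integral\<^sup>L MM (\<lambda>x. fst (snd (W x)) * chi x)"
    using a1 LIMSEQ_unique by blast
  have b1: "(\<lambda>n. integral\<^sup>L MM (\<lambda>x. \<phi> n x * dT chi x)) \<longlonglongrightarrow> integral\<^sup>L MM (\<lambda>x. fst (W x) * dT chi x)"
    by (rule lim_int[OF tl(1) Wc(1) cl(3) cc(1)])
  have b2: "(\<lambda>n. integral\<^sup>L MM (\<lambda>x. dT (\<phi> n) x * chi x)) \<longlonglongrightarrow> integral\<^sup>L MM (\<lambda>x. snd (snd (W x)) * chi x)"
    by (rule lim_int[OF tl(3) Wc(3) cl(1) cc(3)])
  have "(\<lambda>n. integral\<^sup>L MM (\<lambda>x. \<phi> n x * dT chi x)) \<longlonglongrightarrow> - integral\<^sup>L MM (\<lambda>x. snd (snd (W x)) * chi x)"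
    using tendsto_minus[OF b2] weak_T[OF t c] by simp
  then show "integral\<^sup>L MM (\<lambda>x. fst (W x) * dT chi x) = - integral\<^sup>L MM (\<lambda>x. snd (snd (W x)) * chi x)"
    using b1 LIMSEQ_unique by blast
qed

lemma exist_main:
  fixes a m :: real
  assumes a: "a \<ge> 4" and m: "m \<ge> 6"
  shows "\<exists>C. \<forall>F. L2 F \<longrightarrow>
     (\<exists>w WR WT.
        H10 (\<lambda>x. rho (fst x) powr (m - 1) * w x) WR WT \<and>
        weak_sol a m F (\<lambda>x. rho (fst x) powr (m - 1) * w x) WR WT \<and>
        H1norm (\<lambda>x. rho (fst x) powr (m - 1) * w x) WR WT \<le> C * L2norm F)"
proof -
  have c0: "(m - 1) * (m - 2) > 0" using m by simp
  interpret S: setting a "(m - 1) * (m - 2)" using a c0 by unfold_locales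
  define K where "K = (3/2) powr (m - 2) * (a + 3)"
  have K0: "K > 0" unfolding K_def using a by simp
  show ?thesis
  proof (intro exI[of _ "S.Kc * K"] allI impI)
    fix F assume F: "L2 F"
    have Fm[measurable]: "F \<in> borel_measurable MM" and Fi: "integrable MM (\<lambda>x. (F x)^2)"
      using F by (auto simp: L2_MM)
    define G where "G x = rho (fst x) powr (m - 2) * F x * (fst x + a - 4)" for x
    have Gm: "G \<in> borel_measurable MM" unfolding G_def by measurable
    have Gb: "\<bar>G x\<bar> \<le> K * \<bar>F x\<bar>" if x: "x \<in> Om" for x
    proof -
      have r: "0 < rho (fst x)" "rho (fst x) \<le> 3/2" using rho_Om[OF x] rho_le by auto
      have w: "0 \<le> fst x + a - 4" "fst x + a - 4 \<le> a + 3" using Om_fst[OF x] a by auto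
      have p: "rho (fst x) powr (m - 2) \<le> (3/2) powr (m - 2)" using r m by (intro powr_mono2) auto
      have "\<bar>G x\<bar> = rho (fst x) powr (m - 2) * (fst x + a - 4) * \<bar>F x\<bar>"
        unfolding G_def using w by (simp add: abs_mult)
      also have "\<dots> \<le> (3/2) powr (m - 2) * (a + 3) * \<bar>F x\<bar>"
        using p w by (intro mult_right_mono mult_mono) auto
      finally show ?thesis by (simp add: K_def)
    qed
    have G2: "(G x)^2 \<le> K^2 * (F x)^2" if "x \<in> Om" for x
    proof -
      have "\<bar>G x\<bar>^2 \<le> (K * \<bar>F x\<bar>)^2" using Gb[OF that] by (intro power_mono) auto
      then show ?thesis by (simp add: power_mult_distrib)
    qed
    have Gi: "integrable MM (\<lambda>x. (G x)^2)"
    proof (rule int_dom)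
      show "integrable MM (\<lambda>x. K^2 * (F x)^2)" using Fi by simp
      show "(\<lambda>x. (G x)^2) \<in> borel_measurable MM" using Gm by (rule borel_measurable_power)
      show "\<bar>(G x)^2\<bar> \<le> K^2 * (F x)^2" if "x \<in> Om" for x using G2[OF that] by simp
    qed
    interpret P: prob a "(m - 1) * (m - 2)" G using a c0 Gm Gi by unfold_locales
    have gg: "P.gg \<le> K^2 * integral\<^sup>L MM (\<lambda>x. (F x)^2)"
    proof -
      have "P.gg \<le> integral\<^sup>L MM (\<lambda>x. K^2 * (F x)^2)"
        unfolding P.gg_def using Gi Fi G2 by (intro integral_mono) auto
      then show ?thesis by simp
    qed
    obtain W \<phi> where fW: "S.fin W" and z: "\<And>x. x \<notin> Om \<Longrightarrow> W x = 0" and t: "\<And>n. test (\<phi> n)"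
      and lim: "(\<lambda>n. S.EN (\<lambda>x. tU (\<phi> n) x - W x)) \<longlonglongrightarrow> 0"
      and sol: "\<And>V VR VT. H10 V VR VT \<Longrightarrow> S.BB W (trip V VR VT) + P.ell (trip V VR VT) = 0"
      and EW: "S.EN W \<le> S.Kc * P.gg"
      using P.prob_main by blast
    define W0 where "W0 x = fst (W x)" for x
    define WR where "WR x = fst (snd (W x))" for x
    define WT where "WT x = snd (snd (W x))" for x
    define w where "w x = W0 x / rho (fst x) powr (m - 1)" for x
    have Weq: "(\<lambda>x. rho (fst x) powr (m - 1) * w x) = W0"
    proof
      fix x show "rho (fst x) powr (m - 1) * w x = W0 x"
      proof (cases "x \<in> Om")
        case True
        then show ?thesis using powr_pos_Om[OF True, of "m - 1"] by (simp add: w_def)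
      next
        case False
        then show ?thesis using z[OF False] by (simp add: w_def W0_def)
      qed
    qed
    have trW: "trip W0 WR WT = W" by (simp add: trip_def W0_def WR_def WT_def fun_eq_iff)
    have LW: "L2v W" by (rule S.fin_L2v[OF fW])
    have FD: "S.fin (\<lambda>x. tU (\<phi> n) x - W x)" for n by (rule S.fin_diff[OF S.test_fin(1)[OF t] fW])
    have conv: "(\<lambda>n. integral\<^sup>L MM (\<lambda>x. (norm (tU (\<phi> n) x - W x))^2)) \<longlonglongrightarrow> 0"
    proof (rule tendsto_sandwich[of "\<lambda>n. 0" _ _ "\<lambda>n. S.Kc * S.EN (\<lambda>x. tU (\<phi> n) x - W x)"])
      show "\<forall>\<^sub>F n in sequentially. 0 \<le> integral\<^sup>L MM (\<lambda>x. (norm (tU (\<phi> n) x - W x))^2)" by simp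
      show "\<forall>\<^sub>F n in sequentially. integral\<^sup>L MM (\<lambda>x. (norm (tU (\<phi> n) x - W x))^2) \<le> S.Kc * S.EN (\<lambda>x. tU (\<phi> n) x - W x)"
        using S.fin_norm(2)[OF FD] by simp
      show "(\<lambda>n. S.Kc * S.EN (\<lambda>x. tU (\<phi> n) x - W x)) \<longlonglongrightarrow> 0" using tendsto_mult_right_zero[OF lim] by simp
    qed simp
    have H: "H10 W0 WR WT"
      unfolding H10_iff trW
    proof (intro conjI exI[of _ \<phi>])
      show "H1 W0 WR WT" unfolding H1_def
        using L2v_comp[OF LW] weak_limit[OF t LW conv] by (simp add: W0_def[abs_def] WR_def[abs_def] WT_def[abs_def])
      show "\<forall>n. test (\<phi> n)" using t by blast
      show "(\<lambda>n. integral\<^sup>L MM (\<lambda>x. (norm (tU (\<phi> n) x - W x))^2)) \<longlonglongrightarrow> 0" by (rule conv)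
    qed
    have WS: "weak_sol a m F W0 WR WT"
      unfolding weak_sol_def Let_def
    proof (intro allI impI conjI)
      fix V VR VT assume HV: "H10 V VR VT"
      have Ieq: "(\<lambda>x. (WR x * VR x + WT x * VT x / (fst x + a - 4)^2 + (m - 1) * (m - 2) / (rho (fst x))^2 * W0 x * V x)
              * (fst x + a - 4)) = (\<lambda>x. S.Bf x (W x) (trip V VR VT x))"
        by (simp add: S.Bf_def trip_def W0_def WR_def WT_def fun_eq_iff)
      have fV: "S.fin (trip V VR VT)" by (rule S.closure(1)[OF HV])
      show "set_integrable lborel Om (\<lambda>x. (WR x * VR x + WT x * VT x / (fst x + a - 4)^2
              + (m - 1) * (m - 2) / (rho (fst x))^2 * W0 x * V x) * (fst x + a - 4))"
        unfolding Ieq integrable_MM_iff[symmetric] by (rule S.fin_B[OF fW fV])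
      have "(LINT x:Om|lborel. (WR x * VR x + WT x * VT x / (fst x + a - 4)^2
              + (m - 1) * (m - 2) / (rho (fst x))^2 * W0 x * V x) * (fst x + a - 4)) = S.BB W (trip V VR VT)"
        unfolding Ieq integral_MM[symmetric] S.BB_def ..
      also have "\<dots> = - P.ell (trip V VR VT)" using sol[OF HV] by simp
      also have "\<dots> = - (LINT x:Om|lborel. rho (fst x) powr (m - 2) * F x * V x * (fst x + a - 4))"
        unfolding P.ell_def integral_MM by (simp add: G_def trip_def mult_ac)
      finally show "(LINT x:Om|lborel. (WR x * VR x + WT x * VT x / (fst x + a - 4)^2
              + (m - 1) * (m - 2) / (rho (fst x))^2 * W0 x * V x) * (fst x + a - 4)) =
          - (LINT x:Om|lborel. rho (fst x) powr (m - 2) * F x * V x * (fst x + a - 4))" .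
    qed
    have NB: "H1norm W0 WR WT \<le> S.Kc * K * L2norm F"
    proof -
      have "H1norm W0 WR WT = sqrt (integral\<^sup>L MM (\<lambda>x. (norm (W x))^2))"
        unfolding H1norm_def integral_MM by (simp add: norm3 W0_def WR_def WT_def)
      also have "\<dots> \<le> sqrt (S.Kc * S.EN W)" using S.fin_norm(2)[OF fW] by simp
      also have "\<dots> \<le> sqrt (S.Kc * (S.Kc * (K^2 * integral\<^sup>L MM (\<lambda>x. (F x)^2))))"
      proof -
        have "S.EN W \<le> S.Kc * (K^2 * integral\<^sup>L MM (\<lambda>x. (F x)^2))"
          using EW gg S.Kc_pos by (meson mult_left_mono less_imp_le order_trans)
        then show ?thesis using S.Kc_pos by (intro real_sqrt_le_mono mult_left_mono) auto
      qed
      also have "\<dots> = S.Kc * K * sqrt (integral\<^sup>L MM (\<lambda>x. (F x)^2))"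
        using S.Kc_pos K0 by (simp add: real_sqrt_mult power2_eq_square)
      also have "\<dots> = S.Kc * K * L2norm F" by (simp add: L2norm_def integral_MM)
      finally show ?thesis .
    qed
    show "\<exists>w WR WT. H10 (\<lambda>x. rho (fst x) powr (m - 1) * w x) WR WT \<and>
        weak_sol a m F (\<lambda>x. rho (fst x) powr (m - 1) * w x) WR WT \<and>
        H1norm (\<lambda>x. rho (fst x) powr (m - 1) * w x) WR WT \<le> S.Kc * K * L2norm F"
    proof -
      have "H10 (\<lambda>x. rho (fst x) powr (m - 1) * w x) WR WT \<and>
        weak_sol a m F (\<lambda>x. rho (fst x) powr (m - 1) * w x) WR WT \<and>
        H1norm (\<lambda>x. rho (fst x) powr (m - 1) * w x) WR WT \<le> S.Kc * K * L2norm F"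
        unfolding Weq using H WS NB by blast
      then show ?thesis by blast
    qed
  qed
qed

theorem proposition6p2:
  fixes a m :: real and j :: int
  assumes "a \<ge> 4" and "j \<ge> 4"
    and "m \<notin> range (\<lambda>k::int. real_of_int k / 2)"
    and "m \<ge> real_of_int j + 2"
  shows "\<exists>C. \<forall>F. L2 F \<longrightarrow>
     (\<exists>w WR WT.
        H10 (\<lambda>x. rho (fst x) powr (m - 1) * w x) WR WT \<and>
        weak_sol a m F (\<lambda>x. rho (fst x) powr (m - 1) * w x) WR WT \<and>
        H1norm (\<lambda>x. rho (fst x) powr (m - 1) * w x) WR WT \<le> C * L2norm F) \<and>
     (\<forall>w1 w2.
        (\<exists>WR WT. H10 (\<lambda>x. rho (fst x) powr (m - 1) * w1 x) WR WT \<and>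
                  weak_sol a m F (\<lambda>x. rho (fst x) powr (m - 1) * w1 x) WR WT) \<longrightarrow>
        (\<exists>WR WT. H10 (\<lambda>x. rho (fst x) powr (m - 1) * w2 x) WR WT \<and>
                  weak_sol a m F (\<lambda>x. rho (fst x) powr (m - 1) * w2 x) WR WT) \<longrightarrow>
        (AE x in lborel. x \<in> Om \<longrightarrow> w1 x = w2 x))"
proof -
  have m6: "m \<ge> 6" using assms(2,4) by linarith
  obtain C where C: "\<forall>F. L2 F \<longrightarrow>
     (\<exists>w WR WT.
        H10 (\<lambda>x. rho (fst x) powr (m - 1) * w x) WR WT \<and>
        weak_sol a m F (\<lambda>x. rho (fst x) powr (m - 1) * w x) WR WT \<and>
        H1norm (\<lambda>x. rho (fst x) powr (m - 1) * w x) WR WT \<le> C * L2norm F)"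
    using exist_main[OF assms(1) m6] by blast
  show ?thesis
  proof (intro exI[of _ C] allI impI conjI)
    fix F assume "L2 F"
    then show "\<exists>w WR WT.
        H10 (\<lambda>x. rho (fst x) powr (m - 1) * w x) WR WT \<and>
        weak_sol a m F (\<lambda>x. rho (fst x) powr (m - 1) * w x) WR WT \<and>
        H1norm (\<lambda>x. rho (fst x) powr (m - 1) * w x) WR WT \<le> C * L2norm F" using C by blast
    fix w1 w2
    assume "\<exists>WR WT. H10 (\<lambda>x. rho (fst x) powr (m - 1) * w1 x) WR WT \<and>
                  weak_sol a m F (\<lambda>x. rho (fst x) powr (m - 1) * w1 x) WR WT"
       and "\<exists>WR WT. H10 (\<lambda>x. rho (fst x) powr (m - 1) * w2 x) WR WT \<and>
                  weak_sol a m F (\<lambda>x. rho (fst x) powr (m - 1) * w2 x) WR WT"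
    then show "AE x in lborel. x \<in> Om \<longrightarrow> w1 x = w2 x"
      using uniq_main[OF assms(1) m6] by blast
  qed
qed

end
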